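(* Fix $k\ge1$. Let $H$ be the free abelian group with basis $\{h_{i_1\dots i_{2k+3}}\mid\{i_1,\dots,i_{2k+3}\}=\{1,\dots,2k+3\}\}$. Let $W=P_{2k+3}\cap\Gamma\subset\mathbb Z\langle X\rangle$ and $W'\subseteq W$ the subgroup generated by those products $c_1\cdots c_m\in P_{2k+3}$ of commutators $c_i\in\Lambda$ that contain a commutator of length at least $4$ or at least two distinct factors of length $3$. Define $\psi:H\to W/W'$ by $\psi(h_{i_1\dots i_{2k+3}})=[x_{i_1},x_{i_2}]\cdots[x_{i_{2k-1}},x_{i_{2k}}][x_{i_{2k+1}},x_{i_{2k+2}},x_{i_{2k+3}}]+W'$. Let $Q$ be the subgroup of $H$ generated by all elements (for all index tuples with $\{i_1,\dots,i_{2k+3}\}=\{1,\dots,2k+3\}$) \begin{gather*} h_{i_1\dots i_{2l-2}\,i_{2l-1}\,i_{2l}\,i_{2l+1}\dots i_{2k+3}}+h_{i_1\dots i_{2l-2}\,i_{2l}\,i_{2l-1}\,i_{2l+1}\dots i_{2k+3}}\quad(1\le l\le k+1),\\ h_{i_1\dots i_{2l-4}\,i_{2l-3}\,i_{2l-2}\,i_{2l-1}\,i_{2l}\,i_{2l+1}\dots i_{2k+3}}-h_{i_1\dots i_{2l-4}\,i_{2l-1}\,i_{2l}\,i_{2l-3}\,i_{2l-2}\,i_{2l+1}\dots i_{2k+3}}\quad(2\le l\le k),\\ h_{i_1\dots i_{2k}\,i_{2k+1}\,i_{2k+2}\,i_{2k+3}}+h_{i_1\dots i_{2k}\,i_{2k+2}\,i_{2k+3}\,i_{2k+1}}+h_{i_1\dots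 i_{2k}\,i_{2k+3}\,i_{2k+1}\,i_{2k+2}}. \end{gather*} Then $\ker\psi=Q$.
   Context: $\mathbb Z\langle X\rangle$ is the free unital associative ring on $X=\{x_1,x_2,\dots\}$. Commutators are left-normed: $[a,b]=ab-ba$, $[a_1,\dots,a_n]=[[a_1,\dots,a_{n-1}],a_n]$. $\Lambda$ is the set of all commutators $[x_{i_1},\dots,x_{i_l}]$, $l\ge2$; $\Gamma$ is the unital subring generated by $\Lambda$. $P_n$ is the additive subgroup generated by all monomials of degree exactly $1$ in each of $x_1,\dots,x_n$ and involving no other variables. *)

theory Defs
  imports Main "HOL-Library.Poly_Mapping"
begin

text \<open>Elements of the free unital associative ring Z<X> are finitely supported
 functions from words (lists of variable indices) to int. The variable x_i
 is the word [i]; the variables of X are those with index i >= 1.\<close>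

type_synonym ncpoly = "nat list \<Rightarrow>\<^sub>0 int"

definition ncmult :: "ncpoly \<Rightarrow> ncpoly \<Rightarrow> ncpoly" where
  "ncmult p q = (\<Sum>u\<in>Poly_Mapping.keys p. \<Sum>v\<in>Poly_Mapping.keys q.
      Poly_Mapping.single (u @ v) (Poly_Mapping.lookup p u * Poly_Mapping.lookup q v))"

definition ncone :: ncpoly where
  "ncone = Poly_Mapping.single [] 1"

definition ncvar :: "nat \<Rightarrow> ncpoly" where
  "ncvar i = Poly_Mapping.single [i] 1"

definition ncsmult :: "int \<Rightarrow> ncpoly \<Rightarrow> ncpoly" where
  "ncsmult c p = ncmult (Poly_Mapping.single [] c) p"

definition ncprod :: "ncpoly list \<Rightarrow> ncpoly" where
  "ncprod ps = foldr ncmult ps ncone"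

definition comm :: "ncpoly \<Rightarrow> ncpoly \<Rightarrow> ncpoly" where
  "comm a b = ncmult a b - ncmult b a"

fun lcomm :: "nat list \<Rightarrow> ncpoly" where
  "lcomm [] = ncone"
| "lcomm (i # js) = foldl (\<lambda>c j. comm c (ncvar j)) (ncvar i) js"

definition comm_idx :: "nat list \<Rightarrow> bool" where
  "comm_idx is \<longleftrightarrow> length is \<ge> 2 \<and> (\<forall>i\<in>set is. 1 \<le> i)"

definition Lambda :: "ncpoly set" where
  "Lambda = {lcomm is | is. comm_idx is}"

inductive_set subring_gen :: "ncpoly set \<Rightarrow> ncpoly set" for S where
  one: "ncone \<in> subring_gen S"
| gen: "a \<in> S \<Longrightarrow> a \<in> subring_gen S"
| diff: "a \<in> subring_gen S \<Longrightarrow> b \<in> subring_gen S \<Longrightarrow> a - b \<in> subring_gen S"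
| mult: "a \<in> subring_gen S \<Longrightarrow> b \<in> subring_gen S \<Longrightarrow> ncmult a b \<in> subring_gen S"

definition Gamma :: "ncpoly set" where
  "Gamma = subring_gen Lambda"

inductive_set addgen :: "'a::ab_group_add set \<Rightarrow> 'a set" for S where
  zero: "0 \<in> addgen S"
| gen: "a \<in> S \<Longrightarrow> a \<in> addgen S"
| diff: "a \<in> addgen S \<Longrightarrow> b \<in> addgen S \<Longrightarrow> a - b \<in> addgen S"

definition mlwords :: "nat \<Rightarrow> nat list set" where
  "mlwords n = {w. distinct w \<and> set w = {1..n}}"

definition P :: "nat \<Rightarrow> ncpoly set" where
  "P n = addgen {Poly_Mapping.single w 1 | w. w \<in> mlwords n}"

definition W :: "nat \<Rightarrow> ncpoly set" where
  "W k = P (2*k+3) \<inter> Gamma"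

definition Wprime :: "nat \<Rightarrow> ncpoly set" where
  "Wprime k = addgen {x. \<exists>cs. x = ncprod (map lcomm cs)
      \<and> (\<forall>c\<in>set cs. comm_idx c)
      \<and> ncprod (map lcomm cs) \<in> P (2*k+3)
      \<and> ((\<exists>c\<in>set cs. 4 \<le> length c) \<or> 2 \<le> length (filter (\<lambda>c. length c = 3) cs))}"

text \<open>The free abelian group H: basis element h_w is single w 1 for w a
 permutation of [1..2k+3].\<close>
definition H :: "nat \<Rightarrow> (nat list \<Rightarrow>\<^sub>0 int) set" where
  "H k = {h. Poly_Mapping.keys h \<subseteq> mlwords (2*k+3)}"

definition hb :: "nat list \<Rightarrow> (nat list \<Rightarrow>\<^sub>0 int)" where
  "hb w = Poly_Mapping.single w 1"

definition psi_gen :: "nat \<Rightarrow> nat list \<Rightarrow> ncpoly" where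
  "psi_gen k w = ncprod (map (\<lambda>j. lcomm [w ! (2*j), w ! (2*j+1)]) [0..<k]
       @ [lcomm [w ! (2*k), w ! (2*k+1), w ! (2*k+2)]])"

text \<open>Linear extension to H, with values in Z<X>; psi itself is this followed
 by the projection to W/W'.\<close>
definition psi_lift :: "nat \<Rightarrow> (nat list \<Rightarrow>\<^sub>0 int) \<Rightarrow> ncpoly" where
  "psi_lift k h = (\<Sum>w\<in>Poly_Mapping.keys h. ncsmult (Poly_Mapping.lookup h w) (psi_gen k w))"

definition ker_psi :: "nat \<Rightarrow> (nat list \<Rightarrow>\<^sub>0 int) set" where
  "ker_psi k = {h \<in> H k. psi_lift k h \<in> Wprime k}"

definition Q :: "nat \<Rightarrow> (nat list \<Rightarrow>\<^sub>0 int) set" where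
  "Q k = addgen (
     {hb (a @ [p, q] @ b) + hb (a @ [q, p] @ b) | a p q b l.
        a @ [p, q] @ b \<in> mlwords (2*k+3) \<and> 1 \<le> l \<and> l \<le> k+1 \<and> length a = 2*l-2}
   \<union> {hb (a @ [p, q, r, s] @ b) - hb (a @ [r, s, p, q] @ b) | a p q r s b l.
        a @ [p, q, r, s] @ b \<in> mlwords (2*k+3) \<and> 2 \<le> l \<and> l \<le> k \<and> length a = 2*l-4}
   \<union> {hb (a @ [p, q, r]) + hb (a @ [q, r, p]) + hb (a @ [r, p, q]) | a p q r.
        a @ [p, q, r] \<in> mlwords (2*k+3) \<and> length a = 2*k})"

end

theory Submission
  imports Defs "HOL-Library.Function_Algebras" "HOL-Library.Multiset"
begin


instantiation list :: (type) monoid_add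
begin
definition zero_list_def: "0 = []"
definition plus_list_def: "(xs::'a list) + ys = xs @ ys"
instance by standard (auto simp: zero_list_def plus_list_def)
end

lemma frag_cmul_single: "frag_cmul c (Poly_Mapping.single u 1) = Poly_Mapping.single u c"
  by (rule poly_mapping_eqI) (simp add: lookup_single)

lemma pm_expand: "(p::'a \<Rightarrow>\<^sub>0 int) = (\<Sum>u\<in>Poly_Mapping.keys p. Poly_Mapping.single u (Poly_Mapping.lookup p u))"
  using frag_expansion[of p] by (simp add: frag_extend_def frag_cmul_single)

lemma ncmult_eq: "ncmult p q = p * q"
proof -
  have "p * q = (\<Sum>u\<in>Poly_Mapping.keys p. Poly_Mapping.single u (Poly_Mapping.lookup p u)) *
      (\<Sum>v\<in>Poly_Mapping.keys q. Poly_Mapping.single v (Poly_Mapping.lookup q v))"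
    using pm_expand[of p] pm_expand[of q] by simp
  also have "\<dots> = ncmult p q"
    by (simp add: ncmult_def sum_distrib_left sum_distrib_right mult_single plus_list_def sum.swap[of _ "Poly_Mapping.keys q"])
  finally show ?thesis by simp
qed

lemma ncone_eq: "ncone = 1" by (simp add: ncone_def zero_list_def[symmetric])

lemma ncsmult_eq: "ncsmult c p = frag_cmul c p"
  unfolding ncsmult_def ncmult_eq zero_list_def[symmetric] mult_map_scale_conv_mult[symmetric]
  by (rule poly_mapping_eqI) (simp add: frag_cmul_def Poly_Mapping.map.rep_eq when_def)

lemma ncprod_eq: "ncprod ps = prod_list ps"
  by (induct ps) (simp_all add: ncprod_def ncmult_eq ncone_eq)

lemma comm_eq: "comm a b = a * b - b * a" by (simp add: comm_def ncmult_eq)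

lemma psi_lift_eq: "psi_lift k h = frag_extend (psi_gen k) h"
  by (simp add: psi_lift_def frag_extend_def ncsmult_eq)



lemma lcomm_snoc: "lcomm (i # js @ [j]) = lcomm (i # js) * ncvar j - ncvar j * lcomm (i # js)"
  by (simp add: comm_eq)

lemma keys_diff_sub: "Poly_Mapping.keys (a - b) \<subseteq> Poly_Mapping.keys a \<union> Poly_Mapping.keys (b::'a \<Rightarrow>\<^sub>0 int)"
  by (rule keys_diff)

lemma keys_mult_sub: "Poly_Mapping.keys ((a::ncpoly) * b) \<subseteq> {u @ v | u v. u \<in> Poly_Mapping.keys a \<and> v \<in> Poly_Mapping.keys b}"
  using keys_mult[of a b] by (auto simp: plus_list_def)

lemma keys_lcomm: "Poly_Mapping.keys (lcomm cs) \<subseteq> {u. mset u = mset cs}"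
proof (cases cs)
  case Nil then show ?thesis by (simp add: ncone_def)
next
  case (Cons i js)
  have "Poly_Mapping.keys (lcomm (i # js)) \<subseteq> {u. mset u = mset (i # js)}"
  proof (induct js rule: rev_induct)
    case Nil then show ?case by (simp add: ncvar_def)
  next
    case (snoc j js)
    let ?a = "lcomm (i # js)"
    have kv: "Poly_Mapping.keys (ncvar j) = {[j]}" by (simp add: ncvar_def)
    have "Poly_Mapping.keys (lcomm (i # js @ [j])) \<subseteq> Poly_Mapping.keys (?a * ncvar j) \<union> Poly_Mapping.keys (ncvar j * ?a)"
      unfolding lcomm_snoc by (rule keys_diff_sub)
    also have "\<dots> \<subseteq> {u. mset u = mset (i # js @ [j])}"
    proof
      fix u assume "u \<in> Poly_Mapping.keys (?a * ncvar j) \<union> Poly_Mapping.keys (ncvar j * ?a)"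
      then obtain x where "x \<in> Poly_Mapping.keys ?a" "u = x @ [j] \<or> u = [j] @ x"
        using keys_mult_sub[of ?a "ncvar j"] keys_mult_sub[of "ncvar j" ?a] kv by blast
      moreover then have "mset x = mset (i # js)" using snoc by blast
      ultimately show "u \<in> {u. mset u = mset (i # js @ [j])}" by auto
    qed
    finally show ?case .
  qed
  then show ?thesis using Cons by simp
qed

lemma keys_prod_lcomm: "Poly_Mapping.keys (prod_list (map lcomm cs)) \<subseteq> {u. mset u = mset (concat cs)}"
proof (induct cs)
  case Nil then show ?case by (simp add: zero_list_def)
next
  case (Cons c cs)
  show ?case
  proof
    fix u assume "u \<in> Poly_Mapping.keys (prod_list (map lcomm (c # cs)))"
    then obtain x y where "x \<in> Poly_Mapping.keys (lcomm c)" "y \<in> Poly_Mapping.keys (prod_list (map lcomm cs))" "u = x @ y"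
      using keys_mult_sub[of "lcomm c" "prod_list (map lcomm cs)"] by auto
    moreover then have "mset x = mset c" "mset y = mset (concat cs)" using keys_lcomm[of c] Cons by blast+
    ultimately show "u \<in> {u. mset u = mset (concat (c # cs))}" by auto
  qed
qed

lemma mlwords_mset: assumes "mset u = mset w" "w \<in> mlwords n" shows "u \<in> mlwords n"
proof -
  have "set u = set w" by (rule mset_eq_setD[OF assms(1)])
  moreover have "distinct u = distinct w" by (rule mset_eq_imp_distinct_iff[OF assms(1)])
  ultimately show ?thesis using assms(2) by (simp add: mlwords_def)
qed

lemma addgen_diff_closed: "a \<in> addgen S \<Longrightarrow> b \<in> addgen S \<Longrightarrow> a - b \<in> addgen S"
  by (rule addgen.diff)

lemma P_keys: "Poly_Mapping.keys x \<subseteq> mlwords n \<Longrightarrow> x \<in> P n"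
  unfolding P_def
  by (induct x rule: frag_induction) (auto intro: addgen.intros)

lemma keys_P: "x \<in> P n \<Longrightarrow> Poly_Mapping.keys x \<subseteq> mlwords n"
  unfolding P_def
proof (induct rule: addgen.induct)
  case (diff a b) then show ?case using keys_diff_sub[of a b] by blast
qed auto

fun PL :: "nat list \<Rightarrow> nat list list" where
  "PL (x # y # r) = [x, y] # PL r"
| "PL _ = []"

fun IL :: "nat \<Rightarrow> nat list \<Rightarrow> nat list list" where
  "IL 0 w = [take 3 w]"
| "IL (Suc m) w = take 2 w # IL m (drop 2 w)"

definition G :: "nat \<Rightarrow> nat list \<Rightarrow> ncpoly" where
  "G m w = prod_list (map lcomm (IL m w))"

lemma IL_idx: "length w \<ge> 2*k+3 \<Longrightarrow>
  map (\<lambda>j. [w ! (2*j), w ! (2*j+1)]) [0..<k] @ [[w ! (2*k), w ! (2*k+1), w ! (2*k+2)]] = IL k w"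
proof (induct k arbitrary: w)
  case 0
  then show ?case by (cases w; cases "tl w"; cases "tl (tl w)") (auto simp: numeral_3_eq_3)
next
  case (Suc m)
  have IH: "map (\<lambda>j. [drop 2 w ! (2*j), drop 2 w ! (2*j+1)]) [0..<m] @ [[drop 2 w ! (2*m), drop 2 w ! (2*m+1), drop 2 w ! (2*m+2)]] = IL m (drop 2 w)"
    using Suc.hyps[of "drop 2 w"] Suc.prems by simp
  have le: "2 \<le> length w" using Suc.prems by simp
  have IH2: "map (\<lambda>j. [w ! (2*Suc j), w ! (2*Suc j+1)]) [0..<m] @ [[w ! (2*Suc m), w ! (2*Suc m+1), w ! (2*Suc m+2)]] = IL m (drop 2 w)"
    using IH unfolding nth_drop[OF le] by (simp add: ac_simps)
  have t2: "take 2 w = [w!0, w!1]" using Suc.prems by (cases w; cases "tl w") auto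
  have u: "[0..<Suc m] = 0 # map Suc [0..<m]" by (simp add: map_Suc_upt upt_conv_Cons)
  show ?case unfolding u using IH2 t2 by (simp add: o_def)
qed

lemma psi_gen_G: assumes "length w = 2*k+3" shows "psi_gen k w = G k w"
proof -
  have e: "map (\<lambda>j. lcomm [w ! (2*j), w ! (2*j+1)]) [0..<k] @ [lcomm [w ! (2*k), w ! (2*k+1), w ! (2*k+2)]]
     = map lcomm (map (\<lambda>j. [w ! (2*j), w ! (2*j+1)]) [0..<k] @ [[w ! (2*k), w ! (2*k+1), w ! (2*k+2)]])"
    by simp
  show ?thesis
    by (simp only: psi_gen_def ncprod_eq G_def e IL_idx[of k w] assms order_refl)
qed

lemma IL_append: "length a = 2*j \<Longrightarrow> j \<le> m \<Longrightarrow> IL m (a @ r) = PL a @ IL (m - j) r"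
proof (induct j arbitrary: a m)
  case 0 then show ?case by simp
next
  case (Suc j)
  then obtain x y a' where a: "a = x # y # a'" "length a' = 2*j"
    by (cases a; cases "tl a") auto
  obtain m' where m: "m = Suc m'" "j \<le> m'" using Suc.prems by (cases m) auto
  show ?case using Suc.hyps[OF a(2) m(2)] a m by simp
qed

lemma concat_PL: "even (length a) \<Longrightarrow> concat (PL a) = a"
  by (induct a rule: PL.induct) auto

lemma concat_IL: "length w = 2*m+3 \<Longrightarrow> concat (IL m w) = w"
  by (induct m arbitrary: w) auto

lemma len_PL: "c \<in> set (PL a) \<Longrightarrow> length c = 2"
  by (induct a rule: PL.induct) auto

lemma len_IL: "length w = 2*m+3 \<Longrightarrow> c \<in> set (IL m w) \<Longrightarrow> length c = 2 \<or> length c = 3"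
proof (induct m arbitrary: w)
  case 0 then show ?case by auto
next
  case (Suc m)
  then have "c = take 2 w \<or> c \<in> set (IL m (drop 2 w))" by simp
  then show ?case using Suc.hyps[of "drop 2 w"] Suc.prems by auto
qed



lemma lcomm2: "lcomm [p,q] = ncvar p * ncvar q - ncvar q * ncvar p" by (simp add: comm_eq)
lemma lcomm3: "lcomm [p,q,r] = lcomm [p,q] * ncvar r - ncvar r * lcomm [p,q]" by (simp add: comm_eq)
lemma lcomm4: "lcomm [p,q,r,s] = lcomm [p,q,r] * ncvar s - ncvar s * lcomm [p,q,r]" by (simp add: comm_eq)

lemma lcomm_swap2: "lcomm [q,p] = - lcomm [p,q]" by (simp add: comm_eq)
lemma lcomm_swap3: "lcomm [q,p,r] = - lcomm [p,q,r]"
  by (simp add: comm_eq algebra_simps)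
lemma jacobi: "lcomm [p,q,r] + lcomm [q,r,p] + lcomm [r,p,q] = 0"
  by (simp add: comm_eq algebra_simps)
lemma comm22: "lcomm [p,q] * lcomm [r,s] - lcomm [r,s] * lcomm [p,q] = lcomm [p,q,r,s] - lcomm [p,q,s,r]"
  by (simp add: comm_eq algebra_simps)

lemma ml_len: "w \<in> mlwords n \<Longrightarrow> length w = n"
  unfolding mlwords_def using distinct_card[of w] by auto

lemma Wprime_gen:
  assumes "\<forall>c\<in>set cs. 2 \<le> length c" "mset (concat cs) = mset w" "w \<in> mlwords (2*k+3)"
    "\<exists>c\<in>set cs. 4 \<le> length c"
  shows "prod_list (map lcomm cs) \<in> Wprime k"
proof -
  have sw: "set (concat cs) = {1..2*k+3}" using assms(2,3) mset_eq_setD[OF assms(2)] by (simp add: mlwords_def)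
  have ci: "\<forall>c\<in>set cs. comm_idx c"
  proof
    fix c assume c: "c \<in> set cs"
    have "set c \<subseteq> set (concat cs)" using c by auto
    then show "comm_idx c" using assms(1) c sw by (auto simp: comm_idx_def)
  qed
  have "prod_list (map lcomm cs) \<in> P (2*k+3)"
    apply (rule P_keys)
    using keys_prod_lcomm[of cs] mlwords_mset[OF _ assms(3)] assms(2) by auto
  then show ?thesis unfolding Wprime_def
    by (intro addgen.gen) (use ci assms(4) in \<open>auto simp: ncprod_eq\<close>)
qed

lemma psi_hb: "psi_lift k (hb w) = psi_gen k w"
  by (simp add: psi_lift_eq hb_def)

lemma ker_zero: "0 \<in> ker_psi k"
  by (simp add: ker_psi_def H_def psi_lift_eq Wprime_def addgen.zero)

lemma ker_diff: "a \<in> ker_psi k \<Longrightarrow> b \<in> ker_psi k \<Longrightarrow> a - b \<in> ker_psi k"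
  unfolding ker_psi_def H_def
  using keys_diff_sub[of a b] by (auto simp: psi_lift_eq frag_extend_diff Wprime_def intro: addgen.diff)

lemma hb_keys: "Poly_Mapping.keys (hb w) = {w}" by (simp add: hb_def)

lemma in_H1: "w \<in> mlwords (2*k+3) \<Longrightarrow> hb w \<in> H k" by (simp add: H_def hb_keys)

lemma in_H_add: "a \<in> H k \<Longrightarrow> b \<in> H k \<Longrightarrow> a + b \<in> H k"
  unfolding H_def using keys_add[of a b] by auto
lemma in_H_diff: "a \<in> H k \<Longrightarrow> b \<in> H k \<Longrightarrow> a - b \<in> H k"
  unfolding H_def using keys_diff_sub[of a b] by auto

lemma ml_swap2: "a @ [p,q] @ b \<in> mlwords n \<Longrightarrow> a @ [q,p] @ b \<in> mlwords n"
  by (auto simp: mlwords_def)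
lemma ml_swap4: "a @ [p,q,r,s] @ b \<in> mlwords n \<Longrightarrow> a @ [r,s,p,q] @ b \<in> mlwords n"
  by (auto simp: mlwords_def)
lemma ml_rot3: "a @ [p,q,r] \<in> mlwords n \<Longrightarrow> a @ [q,r,p] \<in> mlwords n"
  by (auto simp: mlwords_def)

lemma G_split: "length a = 2*j \<Longrightarrow> j \<le> m \<Longrightarrow> G m (a @ r) = prod_list (map lcomm (PL a)) * G (m - j) r"
  by (simp add: G_def IL_append)

lemma gen1:
  assumes w: "a @ [p,q] @ b \<in> mlwords (2*k+3)" and l: "1 \<le> l" "l \<le> k+1" "length a = 2*l-2"
  shows "psi_gen k (a @ [p,q] @ b) + psi_gen k (a @ [q,p] @ b) = 0"
proof -
  define j where "j = l - 1"
  have aj: "length a = 2*j" "j \<le> k" using l by (auto simp: j_def)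
  have lw: "length (a @ [p,q] @ b) = 2*k+3" using ml_len[OF w] by simp
  then have lb: "length b = 2*(k-j) + 1" using aj by simp
  have e: "psi_gen k (a @ [p,q] @ b) = prod_list (map lcomm (PL a)) * G (k-j) ([p,q] @ b)"
          "psi_gen k (a @ [q,p] @ b) = prod_list (map lcomm (PL a)) * G (k-j) ([q,p] @ b)"
    using psi_gen_G lw G_split[OF aj] by auto
  show ?thesis
  proof (cases "k - j")
    case 0
    then obtain r where "b = [r]" using lb by (cases b) auto
    then show ?thesis unfolding e using 0 by (simp add: G_def comm_eq algebra_simps)
  next
    case (Suc m)
    then show ?thesis unfolding e by (simp add: G_def comm_eq algebra_simps)
  qed
qed

lemma gen3:
  assumes w: "a @ [p,q,r] \<in> mlwords (2*k+3)" and l: "length a = 2*k"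
  shows "psi_gen k (a @ [p,q,r]) + psi_gen k (a @ [q,r,p]) + psi_gen k (a @ [r,p,q]) = 0"
proof -
  have e: "psi_gen k (a @ [x,y,z]) = prod_list (map lcomm (PL a)) * lcomm [x,y,z]" for x y z
    using psi_gen_G[of "a @ [x,y,z]" k] l G_split[OF l order_refl, of "[x,y,z]"] by (simp add: G_def)
  show ?thesis unfolding e using jacobi[of p q r]
    by (metis distrib_left mult_zero_right)
qed

lemma gen2:
  assumes w: "a @ [p,q,r,s] @ b \<in> mlwords (2*k+3)" and l: "2 \<le> l" "l \<le> k" "length a = 2*l-4"
  shows "psi_gen k (a @ [p,q,r,s] @ b) - psi_gen k (a @ [r,s,p,q] @ b) \<in> Wprime k"
proof -
  define j where "j = l - 2"
  define m where "m = k - j - 2"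
  have aj: "length a = 2*j" "j \<le> k" "k - j = Suc (Suc m)" using l by (auto simp: j_def m_def)
  have lw: "length (a @ [p,q,r,s] @ b) = 2*k+3" using ml_len[OF w] by simp
  then have lb: "length b = 2*m + 3" using aj l by (simp add: m_def j_def)
  have lw': "length (a @ [r,s,p,q] @ b) = 2*k+3" using lw by simp
  define Pa where "Pa = prod_list (map lcomm (PL a))"
  define Gb where "Gb = G m b"
  have e: "psi_gen k (a @ [p,q,r,s] @ b) = Pa * (lcomm [p,q] * (lcomm [r,s] * Gb))"
          "psi_gen k (a @ [r,s,p,q] @ b) = Pa * (lcomm [r,s] * (lcomm [p,q] * Gb))"
    using psi_gen_G[OF lw] psi_gen_G[OF lw'] G_split[OF aj(1,2), of "[p,q,r,s] @ b"]
      G_split[OF aj(1,2), of "[r,s,p,q] @ b"] aj(3)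
    by (simp_all add: G_def Pa_def Gb_def)
  have d: "psi_gen k (a @ [p,q,r,s] @ b) - psi_gen k (a @ [r,s,p,q] @ b)
      = Pa * (lcomm [p,q,r,s] * Gb) - Pa * (lcomm [p,q,s,r] * Gb)"
  proof -
    have "psi_gen k (a @ [p,q,r,s] @ b) - psi_gen k (a @ [r,s,p,q] @ b)
       = Pa * ((lcomm [p,q] * lcomm [r,s] - lcomm [r,s] * lcomm [p,q]) * Gb)"
      unfolding e by (simp add: algebra_simps)
    also have "\<dots> = Pa * (lcomm [p,q,r,s] * Gb) - Pa * (lcomm [p,q,s,r] * Gb)"
      unfolding comm22 by (simp add: algebra_simps)
    finally show ?thesis .
  qed
  have cl: "\<forall>c\<in>set (PL a @ [x] @ IL m b). 2 \<le> length c" if "length x = 4" for x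
    using len_PL len_IL[OF lb] that by fastforce
  have cc: "concat (PL a @ [x] @ IL m b) = a @ x @ b" for x
    using concat_PL[of a] concat_IL[OF lb] aj by simp
  have pe: "prod_list (map lcomm (PL a @ [x] @ IL m b)) = Pa * (lcomm x * Gb)" for x
    by (simp only: Pa_def Gb_def G_def map_append prod_list.append list.map prod_list.Cons prod_list.Nil mult_1_right mult.assoc)
  have me: "mset (concat (PL a @ [x] @ IL m b)) = mset (a @ x @ b)" for x
    using cc[of x] by simp
  have t1: "Pa * (lcomm [p,q,r,s] * Gb) \<in> Wprime k"
    using Wprime_gen[OF cl[of "[p,q,r,s]"] me w] unfolding pe by simp
  have t2: "Pa * (lcomm [p,q,s,r] * Gb) \<in> Wprime k"
    using Wprime_gen[OF cl[of "[p,q,s,r]"] me _] ml_swap2[of "a @ [p,q]" r s b] w unfolding pe by simp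
  show ?thesis unfolding d using t1 t2 by (simp add: Wprime_def addgen.diff)
qed

lemma Q_sub_ker: "Q k \<subseteq> ker_psi k"
proof
  fix h assume "h \<in> Q k"
  then show "h \<in> ker_psi k" unfolding Q_def
  proof (induct rule: addgen.induct)
    case zero then show ?case by (rule ker_zero)
  next
    case (diff a b) then show ?case by (blast intro: ker_diff)
  next
    case (gen g)
    then consider
      (g1) a p q b l where "g = hb (a @ [p, q] @ b) + hb (a @ [q, p] @ b)"
        "a @ [p, q] @ b \<in> mlwords (2*k+3)" "1 \<le> l" "l \<le> k+1" "length a = 2*l-2"
    | (g2) a p q r s b l where "g = hb (a @ [p, q, r, s] @ b) - hb (a @ [r, s, p, q] @ b)"
        "a @ [p, q, r, s] @ b \<in> mlwords (2*k+3)" "2 \<le> l" "l \<le> k" "length a = 2*l-4"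
    | (g3) a p q r where "g = hb (a @ [p, q, r]) + hb (a @ [q, r, p]) + hb (a @ [r, p, q])"
        "a @ [p, q, r] \<in> mlwords (2*k+3)" "length a = 2*k"
      by blast
    then show ?case
    proof cases
      case g1
      have "g \<in> H k" using g1 ml_swap2[OF g1(2)] by (auto intro: in_H_add in_H1)
      moreover have "psi_lift k g = 0"
        using gen1[OF g1(2-5)] g1(1) by (simp add: psi_lift_eq frag_extend_add hb_def)
      ultimately show ?thesis by (simp add: ker_psi_def Wprime_def addgen.zero)
    next
      case g2
      have "g \<in> H k" using g2 ml_swap4[OF g2(2)] by (auto intro: in_H_diff in_H1)
      moreover have "psi_lift k g \<in> Wprime k"
        using gen2[OF g2(2-5)] g2(1) by (simp add: psi_lift_eq frag_extend_diff hb_def)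
      ultimately show ?thesis by (simp add: ker_psi_def)
    next
      case g3
      have "g \<in> H k" using g3 ml_rot3[OF g3(2)] ml_rot3[OF ml_rot3[OF g3(2)]] by (auto intro!: in_H_add in_H1)
      moreover have "psi_lift k g = 0"
        using gen3[OF g3(2-3)] g3(1) by (simp add: psi_lift_eq frag_extend_add hb_def)
      ultimately show ?thesis by (simp add: ker_psi_def Wprime_def addgen.zero)
    qed
  qed
qed



type_synonym tup = "nat \<Rightarrow> nat list"

definition fl :: "(nat \<Rightarrow> nat) \<Rightarrow> nat list \<Rightarrow> tup" where
  "fl blk u = (\<lambda>s. filter (\<lambda>i. blk i = s) u)"

lemma fl_append: "fl blk (u @ v) = fl blk u + fl blk v"
  by (simp add: fl_def plus_fun_def plus_list_def)

lemma fl_nil: "fl blk [] = 0"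
  by (simp add: fl_def zero_fun_def zero_list_def)

definition T :: "(nat \<Rightarrow> nat) \<Rightarrow> ncpoly \<Rightarrow> (tup \<Rightarrow>\<^sub>0 int)" where
  "T blk p = frag_extend (\<lambda>u. frag_of (fl blk u)) p"

lemma T_diff: "T blk (a - b) = T blk a - T blk b" by (simp add: T_def frag_extend_diff)
lemma T_add: "T blk (a + b) = T blk a + T blk b" by (simp add: T_def frag_extend_add)
lemma T_zero: "T blk 0 = 0" by (simp add: T_def)
lemma T_single: "T blk (frag_of u) = frag_of (fl blk u)" by (simp add: T_def)
lemma T_minus: "T blk (- a) = - T blk a" by (simp add: T_def frag_extend_minus)

lemma T_mult: "T blk (x * y) = T blk x * T blk y"
proof -
  have "Poly_Mapping.keys x \<subseteq> UNIV" by simp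
  then have "\<forall>y. T blk (x * y) = T blk x * T blk y"
  proof (induct x rule: frag_induction)
    case zero then show ?case by (simp add: T_zero)
  next
    case (one u)
    show ?case
    proof
      fix y :: ncpoly
      have "Poly_Mapping.keys y \<subseteq> UNIV" by simp
      then show "T blk (frag_of u * y) = T blk (frag_of u) * T blk y"
      proof (induct y rule: frag_induction)
        case zero then show ?case by (simp add: T_zero)
      next
        case (one v)
        show ?case by (simp add: mult_single T_single plus_list_def fl_append)
      next
        case (diff a b) then show ?case by (simp add: T_diff algebra_simps)
      qed
    qed
  next
    case (diff a b) then show ?case by (simp add: T_diff algebra_simps)
  qed
  then show ?thesis by simp
qed

lemma T_one: "T blk 1 = 1"
proof -
  have e: "(1::ncpoly) = frag_of []" by (simp add: zero_list_def[symmetric])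
  have "T blk 1 = frag_of (fl blk [])" by (simp only: e T_single)
  then show ?thesis by (simp add: fl_nil)
qed

lemma T_prod: "T blk (prod_list xs) = prod_list (map (T blk) xs)"
  by (induct xs) (simp_all add: T_one T_mult)

definition Sub :: "nat \<Rightarrow> (tup \<Rightarrow>\<^sub>0 int) set" where
  "Sub s = {a. \<forall>\<kappa>\<in>Poly_Mapping.keys a. \<forall>t. t \<noteq> s \<longrightarrow> \<kappa> t = []}"

lemma Sub_mult: "a \<in> Sub s \<Longrightarrow> b \<in> Sub s \<Longrightarrow> a * b \<in> Sub s"
  unfolding Sub_def using keys_mult[of a b] by (fastforce simp: plus_fun_def plus_list_def)

lemma Sub_diff: "a \<in> Sub s \<Longrightarrow> b \<in> Sub s \<Longrightarrow> a - b \<in> Sub s"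
  unfolding Sub_def using keys_diff_sub[of a b] by blast

lemma Sub_zero: "0 \<in> Sub s" by (simp add: Sub_def)

lemma Sub_commute:
  assumes a: "a \<in> Sub s" and b: "b \<in> Sub s'" and ne: "s \<noteq> s'"
  shows "a * b = b * a"
proof -
  have ka: "Poly_Mapping.keys a \<subseteq> {\<kappa>. \<forall>t. t \<noteq> s \<longrightarrow> \<kappa> t = []}" using a by (auto simp: Sub_def)
  have kb: "Poly_Mapping.keys b \<subseteq> {\<kappa>. \<forall>t. t \<noteq> s' \<longrightarrow> \<kappa> t = []}" using b by (auto simp: Sub_def)
  have "\<forall>b. Poly_Mapping.keys b \<subseteq> {\<kappa>. \<forall>t. t \<noteq> s' \<longrightarrow> \<kappa> t = []} \<longrightarrow> a * b = b * a"
    using ka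
  proof (induct a rule: frag_induction)
    case zero then show ?case by simp
  next
    case (one x)
    show ?case
    proof (intro allI impI)
      fix b :: "tup \<Rightarrow>\<^sub>0 int" assume "Poly_Mapping.keys b \<subseteq> {\<kappa>. \<forall>t. t \<noteq> s' \<longrightarrow> \<kappa> t = []}"
      then show "frag_of x * b = b * frag_of x"
      proof (induct b rule: frag_induction)
        case zero then show ?case by simp
      next
        case (one y)
        have "x t @ y t = y t @ x t" for t using one(1) \<open>x \<in> _\<close> ne
          by (cases "t = s") auto
        then have "x + y = y + x"
          by (auto simp: fun_eq_iff plus_fun_def plus_list_def)
        then show ?case by (simp add: mult_single)
      next
        case (diff a b) then show ?case by (simp add: algebra_simps)
      qed
    qed
  next
    case (diff a1 a2) then show ?case by (simp add: algebra_simps)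
  qed
  then show ?thesis using kb by blast
qed

lemma T_var_Sub: "T blk (ncvar i) \<in> Sub (blk i)"
  by (simp add: ncvar_def T_single Sub_def fl_def)

lemma T_lcomm_in: "\<forall>j\<in>set js. blk j = blk i \<Longrightarrow> T blk (lcomm (i # js)) \<in> Sub (blk i)"
proof (induct js rule: rev_induct)
  case Nil then show ?case using T_var_Sub by simp
next
  case (snoc j js)
  then have a: "T blk (lcomm (i # js)) \<in> Sub (blk i)" and v: "T blk (ncvar j) \<in> Sub (blk i)"
    using T_var_Sub[of blk j] by auto
  show ?case unfolding lcomm_snoc T_diff T_mult
    by (intro Sub_diff Sub_mult a v)
qed

lemma T_lcomm_zero: "\<not> (\<forall>j\<in>set js. blk j = blk i) \<Longrightarrow> T blk (lcomm (i # js)) = 0"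
proof (induct js rule: rev_induct)
  case Nil then show ?case by simp
next
  case (snoc j js)
  show ?case
  proof (cases "\<forall>j\<in>set js. blk j = blk i")
    case True
    then have bj: "blk j \<noteq> blk i" using snoc.prems by auto
    have a: "T blk (lcomm (i # js)) \<in> Sub (blk i)" using T_lcomm_in[OF True] .
    show ?thesis unfolding lcomm_snoc T_diff T_mult
      using Sub_commute[OF a T_var_Sub[of blk j]] bj by auto
  next
    case False
    then show ?thesis unfolding lcomm_snoc T_diff T_mult using snoc.hyps by simp
  qed
qed

definition dl :: "nat \<Rightarrow> nat list \<Rightarrow> tup" where
  "dl s u = (\<lambda>t. if t = s then u else [])"

lemma T_lcomm_emb:
  assumes "\<forall>x\<in>set cs. blk x = s"
  shows "T blk (lcomm cs) = frag_extend (\<lambda>u. frag_of (dl s u)) (lcomm cs)"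
  unfolding T_def
proof (rule frag_extend_eq)
  fix u assume "u \<in> Poly_Mapping.keys (lcomm cs)"
  then have "set u = set cs" using keys_lcomm[of cs] by (auto dest: mset_eq_setD)
  then have "fl blk u = dl s u" using assms
    by (auto simp: fl_def dl_def fun_eq_iff filter_id_conv filter_empty_conv)
  then show "frag_of (fl blk u) = frag_of (dl s u)" by simp
qed

lemma lookup_emb: "Poly_Mapping.lookup (frag_extend (\<lambda>u. frag_of (dl s u)) p) (dl s v) = Poly_Mapping.lookup p v"
  using subset_UNIV[of "Poly_Mapping.keys p"]
proof (induct p rule: frag_induction)
  case (one x)
  have "dl s x = dl s v \<longleftrightarrow> x = v" by (auto simp: dl_def fun_eq_iff)
  then show ?case by auto
next
  case (diff a b) then show ?case by (simp add: frag_extend_diff lookup_minus)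
qed simp_all



lemma zero_tup: "(0::tup) = (\<lambda>_. [])" by (simp add: zero_fun_def zero_list_def)

lemma slot_eq:
  assumes x: "\<forall>t. t \<noteq> j \<longrightarrow> x t = []" and y: "\<forall>t\<le>j. y t = []"
  shows "(x + y = \<kappa>) \<longleftrightarrow> (\<forall>t<j. \<kappa> t = []) \<and> dl j (\<kappa> j) = x \<and> \<kappa>(j := []) = y"
proof
  assume e: "x + y = \<kappa>"
  have k: "\<kappa> t = x t @ y t" for t using e by (auto simp: plus_fun_def plus_list_def)
  show "(\<forall>t<j. \<kappa> t = []) \<and> dl j (\<kappa> j) = x \<and> \<kappa>(j := []) = y"
    using x y by (auto simp: k dl_def fun_eq_iff)
next
  assume h: "(\<forall>t<j. \<kappa> t = []) \<and> dl j (\<kappa> j) = x \<and> \<kappa>(j := []) = y"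
  have "x t @ y t = \<kappa> t" for t
  proof -
    consider "t < j" | "t = j" | "t > j" by linarith
    then show ?thesis
    proof cases
      case 1 then show ?thesis using h x y by auto
    next
      case 2
      have "dl j (\<kappa> j) j = x j" using h by simp
      then show ?thesis using 2 y by (simp add: dl_def)
    next
      case 3
      have "(\<kappa>(j := [])) t = y t" using h by simp
      then show ?thesis using 3 x by simp
    qed
  qed
  then show "x + y = \<kappa>" by (auto simp: plus_fun_def plus_list_def fun_eq_iff)
qed

lemma slot_mult:
  assumes X: "X \<in> Sub j" and Y: "Poly_Mapping.keys Y \<subseteq> {\<kappa>. \<forall>t\<le>j. \<kappa> t = []}"
  shows "Poly_Mapping.lookup (X * Y) \<kappa> =
    (if \<forall>t<j. \<kappa> t = [] then Poly_Mapping.lookup X (dl j (\<kappa> j)) * Poly_Mapping.lookup Y (\<kappa>(j := [])) else 0)"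
proof -
  have kx: "Poly_Mapping.keys X \<subseteq> {x. \<forall>t. t \<noteq> j \<longrightarrow> x t = []}" using X by (auto simp: Sub_def)
  have "\<forall>Y. Poly_Mapping.keys Y \<subseteq> {\<kappa>. \<forall>t\<le>j. \<kappa> t = []} \<longrightarrow> Poly_Mapping.lookup (X * Y) \<kappa> =
    (if \<forall>t<j. \<kappa> t = [] then Poly_Mapping.lookup X (dl j (\<kappa> j)) * Poly_Mapping.lookup Y (\<kappa>(j := [])) else 0)"
    using kx
  proof (induct X rule: frag_induction)
    case zero then show ?case by simp
  next
    case (one x)
    show ?case
    proof (intro allI impI)
      fix Y :: "tup \<Rightarrow>\<^sub>0 int" assume "Poly_Mapping.keys Y \<subseteq> {\<kappa>. \<forall>t\<le>j. \<kappa> t = []}"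
      then show "Poly_Mapping.lookup (frag_of x * Y) \<kappa> =
        (if \<forall>t<j. \<kappa> t = [] then Poly_Mapping.lookup (frag_of x) (dl j (\<kappa> j)) * Poly_Mapping.lookup Y (\<kappa>(j := [])) else 0)"
      proof (induct Y rule: frag_induction)
        case zero then show ?case by simp
      next
        case (one y)
        have "x \<in> {x. \<forall>t. t \<noteq> j \<longrightarrow> x t = []}" using \<open>x \<in> _\<close> .
        then have eq: "(x + y = \<kappa>) \<longleftrightarrow> (\<forall>t<j. \<kappa> t = []) \<and> dl j (\<kappa> j) = x \<and> \<kappa>(j := []) = y"
          using slot_eq[of j x y \<kappa>] one by auto
        have eq': "(\<kappa> = x + y) \<longleftrightarrow> (\<forall>t<j. \<kappa> t = []) \<and> dl j (\<kappa> j) = x \<and> \<kappa>(j := []) = y"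
          using eq by auto
        show ?case unfolding mult_single using eq' by (simp add: fun_upd_def)
      next
        case (diff a b) then show ?case by (auto simp: algebra_simps lookup_minus)
      qed
    qed
  next
    case (diff a b) then show ?case by (auto simp: algebra_simps lookup_minus)
  qed
  then show ?thesis using Y by blast
qed

lemma prod_slots:
  assumes "\<forall>i<length Xs. Xs ! i \<in> Sub (j + i)"
  shows "Poly_Mapping.keys (prod_list Xs) \<subseteq> {\<kappa>. \<forall>t. (t < j \<or> t \<ge> j + length Xs) \<longrightarrow> \<kappa> t = []}
   \<and> (\<forall>\<kappa>. Poly_Mapping.lookup (prod_list Xs) \<kappa> = (if (\<forall>t. (t < j \<or> t \<ge> j + length Xs) \<longrightarrow> \<kappa> t = [])
        then (\<Prod>i<length Xs. Poly_Mapping.lookup (Xs ! i) (dl (j+i) (\<kappa> (j+i)))) else 0))"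
  using assms
proof (induct Xs arbitrary: j)
  case Nil
  have c: "(\<forall>t. (t < j \<or> t \<ge> j + length []) \<longrightarrow> \<kappa> t = []) \<longleftrightarrow> \<kappa> = 0" for \<kappa> :: tup
    by (auto simp: zero_tup fun_eq_iff)
  have l: "Poly_Mapping.lookup (1::tup \<Rightarrow>\<^sub>0 int) \<kappa> = (if \<kappa> = 0 then 1 else 0)" for \<kappa>
    by (simp add: lookup_one when_def)
  show ?case unfolding c prod_list.Nil l by (auto simp: zero_tup)
next
  case (Cons X Xs)
  have X: "X \<in> Sub j" using Cons.prems[rule_format, of 0] by simp
  have pr: "\<forall>i<length Xs. Xs ! i \<in> Sub (Suc j + i)" using Cons.prems by fastforce
  note IH = Cons.hyps[OF pr]
  have kY: "Poly_Mapping.keys (prod_list Xs) \<subseteq> {\<kappa>. \<forall>t\<le>j. \<kappa> t = []}" using IH by fastforce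
  have keys: "Poly_Mapping.keys (prod_list (X # Xs)) \<subseteq> {\<kappa>. \<forall>t. (t < j \<or> t \<ge> j + length (X # Xs)) \<longrightarrow> \<kappa> t = []}"
  proof
    fix \<kappa> assume "\<kappa> \<in> Poly_Mapping.keys (prod_list (X # Xs))"
    then obtain x y where xy: "x \<in> Poly_Mapping.keys X" "y \<in> Poly_Mapping.keys (prod_list Xs)" "\<kappa> = x + y"
      using keys_mult[of X "prod_list Xs"] by auto
    have "\<forall>t. t \<noteq> j \<longrightarrow> x t = []" using X xy(1) by (auto simp: Sub_def)
    moreover have "\<forall>t. (t < Suc j \<or> t \<ge> Suc j + length Xs) \<longrightarrow> y t = []" using IH xy(2) by blast
    ultimately show "\<kappa> \<in> {\<kappa>. \<forall>t. (t < j \<or> t \<ge> j + length (X # Xs)) \<longrightarrow> \<kappa> t = []}"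
      using xy(3) by (auto simp: plus_fun_def plus_list_def)
  qed
  have look: "Poly_Mapping.lookup (prod_list (X # Xs)) \<kappa> = (if (\<forall>t. (t < j \<or> t \<ge> j + length (X # Xs)) \<longrightarrow> \<kappa> t = [])
        then (\<Prod>i<length (X # Xs). Poly_Mapping.lookup ((X # Xs) ! i) (dl (j+i) (\<kappa> (j+i)))) else 0)" for \<kappa>
  proof -
    have "Poly_Mapping.lookup (prod_list (X # Xs)) \<kappa> =
      (if \<forall>t<j. \<kappa> t = [] then Poly_Mapping.lookup X (dl j (\<kappa> j)) * Poly_Mapping.lookup (prod_list Xs) (\<kappa>(j := [])) else 0)"
      using slot_mult[OF X kY] by simp
    also have "\<dots> = (if (\<forall>t. (t < j \<or> t \<ge> j + length (X # Xs)) \<longrightarrow> \<kappa> t = [])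
        then (\<Prod>i<length (X # Xs). Poly_Mapping.lookup ((X # Xs) ! i) (dl (j+i) (\<kappa> (j+i)))) else 0)"
    proof -
      have c: "((\<forall>t<j. \<kappa> t = []) \<and> (\<forall>t. (t < Suc j \<or> t \<ge> Suc j + length Xs) \<longrightarrow> (\<kappa>(j := [])) t = []))
         \<longleftrightarrow> (\<forall>t. (t < j \<or> t \<ge> j + length (X # Xs)) \<longrightarrow> \<kappa> t = [])"
        by (auto simp: less_Suc_eq)
      have p: "(\<Prod>i<length (X # Xs). Poly_Mapping.lookup ((X # Xs) ! i) (dl (j+i) (\<kappa> (j+i))))
        = Poly_Mapping.lookup X (dl j (\<kappa> j)) * (\<Prod>i<length Xs. Poly_Mapping.lookup (Xs ! i) (dl (Suc j+i) ((\<kappa>(j := [])) (Suc j+i))))"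
        by (simp add: prod.lessThan_Suc_shift del: prod.lessThan_Suc)
      show ?thesis using IH c p by auto
    qed
    finally show ?thesis .
  qed
  show ?case using keys look by blast
qed



definition pos :: "nat list \<Rightarrow> nat \<Rightarrow> nat" where
  "pos \<sigma> x = length (takeWhile (\<lambda>y. y \<noteq> x) \<sigma>)"

lemma pos_nth: assumes "distinct \<sigma>" "p < length \<sigma>" shows "pos \<sigma> (\<sigma> ! p) = p"
proof -
  have "takeWhile (\<lambda>y. y \<noteq> \<sigma> ! p) \<sigma> = take p \<sigma>"
    by (rule takeWhile_eq_take_P_nth) (use assms in \<open>auto simp: nth_eq_iff_index_eq\<close>)
  then show ?thesis using assms by (simp add: pos_def)
qed

definition blk :: "nat \<Rightarrow> nat list \<Rightarrow> nat \<Rightarrow> nat" where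
  "blk k \<sigma> x = min (pos \<sigma> x div 2) k"

lemma blk_nth: "distinct \<sigma> \<Longrightarrow> p < length \<sigma> \<Longrightarrow> blk k \<sigma> (\<sigma> ! p) = min (p div 2) k"
  by (simp add: blk_def pos_nth)

lemma block_card:
  assumes \<sigma>: "\<sigma> \<in> mlwords (2*k+3)"
  shows "card {x \<in> set \<sigma>. blk k \<sigma> x = s} \<le> (if s = k then 3 else 2)"
proof -
  have d: "distinct \<sigma>" and l: "length \<sigma> = 2*k+3" using \<sigma> ml_len[OF \<sigma>] by (auto simp: mlwords_def)
  have e: "{x \<in> set \<sigma>. blk k \<sigma> x = s} = (!) \<sigma> ` {p. p < 2*k+3 \<and> min (p div 2) k = s}"
    using d l by (auto simp: in_set_conv_nth blk_nth)
  have "{p. p < 2*k+3 \<and> min (p div 2) k = s} \<subseteq> (if s = k then {2*k, 2*k+1, 2*k+2} else {2*s, 2*s+1})"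
    by auto
  then have "card {p. p < 2*k+3 \<and> min (p div 2) k = s} \<le> card (if s = k then {2*k, 2*k+1, 2*k+2} else {2*s, 2*s+1})"
    by (intro card_mono) auto
  also have "\<dots> \<le> (if s = k then 3 else 2)" by (auto simp: card_insert_if)
  finally show ?thesis unfolding e using card_image_le[of "{p. p < 2*k+3 \<and> min (p div 2) k = s}" "(!) \<sigma>"]
    by simp
qed

lemma prod_list_zero: "(0::'a::semiring_1) \<in> set xs \<Longrightarrow> prod_list xs = 0"
  by (induct xs) auto

lemma count_concat: "length (filter (\<lambda>c. x \<in> set c) cs) \<le> count (mset (concat cs)) x"
proof (induct cs)
  case (Cons a cs)
  show ?case
  proof (cases "x \<in> set a")
    case True
    then have "1 \<le> count (mset a) x"
      by (metis One_nat_def Suc_leI count_greater_zero_iff set_mset_mset)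
    then have "Suc (length (filter (\<lambda>c. x \<in> set c) cs)) \<le> count (mset a) x + count (mset (concat cs)) x"
      using Cons by linarith
    then show ?thesis using True by simp
  next
    case False then show ?thesis using Cons by simp
  qed
qed simp

lemma filter_len_mono: "(\<forall>c\<in>set cs. A c \<longrightarrow> B c) \<Longrightarrow> length (filter A cs) \<le> length (filter B cs)"
  by (induct cs) auto

lemma T_Wgen:
  assumes \<sigma>: "\<sigma> \<in> mlwords (2*k+3)" and ci: "\<forall>c\<in>set cs. comm_idx c"
    and xP: "prod_list (map lcomm cs) \<in> P (2*k+3)"
    and cond: "(\<exists>c\<in>set cs. 4 \<le> length c) \<or> 2 \<le> length (filter (\<lambda>c. length c = 3) cs)"
  shows "T (blk k \<sigma>) (prod_list (map lcomm cs)) = 0"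
proof -
  let ?B = "blk k \<sigma>"
  have Tp: "T ?B (prod_list (map lcomm cs)) = prod_list (map (\<lambda>c. T ?B (lcomm c)) cs)"
    by (simp add: T_prod o_def)
  show ?thesis
  proof (cases "\<exists>c\<in>set cs. \<not> (\<forall>y\<in>set c. ?B y = ?B (hd c))")
    case True
    then obtain c where c: "c \<in> set cs" "\<not> (\<forall>y\<in>set c. ?B y = ?B (hd c))" by blast
    obtain i js where cij: "c = i # js" using c(2) by (cases c) auto
    then have "\<not> (\<forall>j\<in>set js. ?B j = ?B i)" using c by auto
    then have "T ?B (lcomm c) = 0" using T_lcomm_zero cij by simp
    then show ?thesis unfolding Tp using c by (intro prod_list_zero) force
  next
    case False
    then have sb: "\<forall>c\<in>set cs. \<forall>y\<in>set c. ?B y = ?B (hd c)" by blast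
    show ?thesis
    proof (cases "prod_list (map lcomm cs) = 0")
      case True then show ?thesis by (simp add: T_zero)
    next
      case False
      then obtain u where u: "u \<in> Poly_Mapping.keys (prod_list (map lcomm cs))" by fastforce
      have uml: "u \<in> mlwords (2*k+3)" using keys_P[OF xP] u by blast
      have mu: "mset u = mset (concat cs)" using keys_prod_lcomm u by blast
      have dc: "distinct (concat cs)" using uml mset_eq_imp_distinct_iff[OF mu] by (simp add: mlwords_def)
      have sc: "set (concat cs) = set \<sigma>" using uml \<sigma> mset_eq_setD[OF mu] by (simp add: mlwords_def)
      have cbound: "length c \<le> (if ?B (hd c) = k then 3 else 2)" if c: "c \<in> set cs" for c
      proof -
        have dcc: "distinct c" using dc c by (simp add: distinct_concat_iff)
        have "set c \<subseteq> {x \<in> set \<sigma>. ?B x = ?B (hd c)}" using sb c sc by auto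
        then have "card (set c) \<le> card {x \<in> set \<sigma>. ?B x = ?B (hd c)}" by (intro card_mono) auto
        then show ?thesis using block_card[OF \<sigma>, of "?B (hd c)"] distinct_card[OF dcc] by simp
      qed
      have False
      proof (cases "\<exists>c\<in>set cs. 4 \<le> length c")
        case True
        then obtain c where c: "c \<in> set cs" "4 \<le> length c" by blast
        show False using cbound[OF c(1)] c(2) by (auto split: if_splits)
      next
        case False
        then have two: "2 \<le> length (filter (\<lambda>c. length c = 3) cs)" using cond by blast
        have d\<sigma>: "distinct \<sigma>" and l\<sigma>: "length \<sigma> = 2*k+3" using \<sigma> ml_len[OF \<sigma>] by (auto simp: mlwords_def)
        define x0 where "x0 = \<sigma> ! (2*k)"
        have x0: "x0 \<in> set \<sigma>" "?B x0 = k" using d\<sigma> l\<sigma> blk_nth[of \<sigma> "2*k" k] by (auto simp: x0_def)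
        have tr: "x0 \<in> set c" if c: "c \<in> set cs" "length c = 3" for c
        proof -
          have dcc: "distinct c" using dc c by (simp add: distinct_concat_iff)
          have bk: "?B (hd c) = k" using cbound[OF c(1)] c(2) by (auto split: if_splits)
          have sub: "set c \<subseteq> {x \<in> set \<sigma>. ?B x = k}" using sb c sc bk by auto
          have "card (set c) = 3" using distinct_card[OF dcc] c by simp
          moreover have "card {x \<in> set \<sigma>. ?B x = k} \<le> 3" using block_card[OF \<sigma>, of k] by simp
          moreover have "card (set c) \<le> card {x \<in> set \<sigma>. ?B x = k}" using sub by (intro card_mono) auto
          ultimately have "set c = {x \<in> set \<sigma>. ?B x = k}"
            using sub by (intro card_subset_eq) auto
          then show ?thesis using x0 by auto
        qed
        have "length (filter (\<lambda>c. length c = 3) cs) \<le> length (filter (\<lambda>c. x0 \<in> set c) cs)"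
          by (rule filter_len_mono) (use tr in auto)
        also have "\<dots> \<le> count (mset (concat cs)) x0" by (rule count_concat)
        also have "\<dots> \<le> 1" using dc by (simp add: distinct_count_atmost_1)
        finally show False using two by simp
      qed
      then show ?thesis ..
    qed
  qed
qed

lemma T_Wprime:
  assumes \<sigma>: "\<sigma> \<in> mlwords (2*k+3)" and x: "x \<in> Wprime k"
  shows "T (blk k \<sigma>) x = 0"
  using x unfolding Wprime_def
proof (induct rule: addgen.induct)
  case zero then show ?case by (simp add: T_zero)
next
  case (gen a)
  then obtain cs where "a = ncprod (map lcomm cs)" "\<forall>c\<in>set cs. comm_idx c"
      "ncprod (map lcomm cs) \<in> P (2*k+3)"
      "(\<exists>c\<in>set cs. 4 \<le> length c) \<or> 2 \<le> length (filter (\<lambda>c. length c = 3) cs)" by blast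
  then show ?case using T_Wgen[OF \<sigma>] by (simp add: ncprod_eq)
next
  case (diff a b) then show ?case by (simp add: T_diff)
qed



lemma lcomm2_exp: "lcomm [a,b] = frag_of [a,b] - frag_of [b,a]"
  by (simp add: comm_eq ncvar_def mult_single plus_list_def)

lemma lcomm3_exp: "lcomm [a,b,c] = frag_of [a,b,c] - frag_of [b,a,c] - frag_of [c,a,b] + frag_of [c,b,a]"
  by (simp add: comm_eq ncvar_def mult_single plus_list_def algebra_simps)

lemma coef2: "a \<noteq> b \<Longrightarrow> Poly_Mapping.lookup (lcomm [a,b]) [a,b] = 1"
  unfolding lcomm2_exp by (simp add: lookup_minus)

lemma coef3: "distinct [a,b,c] \<Longrightarrow> Poly_Mapping.lookup (lcomm [a,b,c]) [a,b,c] = 1"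
  unfolding lcomm3_exp by (simp add: lookup_minus lookup_add)

lemma coef3': "distinct [a,b,c] \<Longrightarrow> Poly_Mapping.lookup (lcomm [a,c,b]) [a,b,c] = 0"
  unfolding lcomm3_exp by (simp add: lookup_minus lookup_add)

definition kap :: "nat \<Rightarrow> nat list \<Rightarrow> tup" where
  "kap k \<sigma> = (\<lambda>t. if t < k then [\<sigma> ! (2*t), \<sigma> ! (2*t+1)] else if t = k then [\<sigma> ! (2*k), \<sigma> ! (2*k+1), \<sigma> ! (2*k+2)] else [])"

definition Fn :: "nat \<Rightarrow> nat list \<Rightarrow> (nat list \<Rightarrow>\<^sub>0 int) \<Rightarrow> int" where
  "Fn k \<sigma> h = Poly_Mapping.lookup (T (blk k \<sigma>) (psi_lift k h)) (kap k \<sigma>)"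

lemma Fn_diff: "Fn k \<sigma> (a - b) = Fn k \<sigma> a - Fn k \<sigma> b"
  by (simp add: Fn_def psi_lift_eq frag_extend_diff T_diff lookup_minus)

lemma Fn_zero: "Fn k \<sigma> 0 = 0"
  by (simp add: Fn_def psi_lift_eq T_zero)

lemma Fn_hb: "Fn k \<sigma> (hb w) = Poly_Mapping.lookup (T (blk k \<sigma>) (psi_gen k w)) (kap k \<sigma>)"
  by (simp add: Fn_def psi_hb)

lemma Fn_ker: "\<sigma> \<in> mlwords (2*k+3) \<Longrightarrow> h \<in> ker_psi k \<Longrightarrow> Fn k \<sigma> h = 0"
  unfolding Fn_def ker_psi_def using T_Wprime by simp

lemma val:
  assumes \<sigma>: "\<sigma> \<in> mlwords (2*k+3)"
    and xy: "(x = \<sigma> ! (2*k+1) \<and> y = \<sigma> ! (2*k+2)) \<or> (x = \<sigma> ! (2*k+2) \<and> y = \<sigma> ! (2*k+1))"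
  shows "Poly_Mapping.lookup (T (blk k \<sigma>) (prod_list (map lcomm
      (map (\<lambda>j. [\<sigma> ! (2*j), \<sigma> ! (2*j+1)]) [0..<k] @ [[\<sigma> ! (2*k), x, y]])))) (kap k \<sigma>)
    = Poly_Mapping.lookup (lcomm [\<sigma> ! (2*k), x, y]) [\<sigma> ! (2*k), \<sigma> ! (2*k+1), \<sigma> ! (2*k+2)]"
proof -
  let ?B = "blk k \<sigma>"
  let ?FL = "map (\<lambda>j. [\<sigma> ! (2*j), \<sigma> ! (2*j+1)]) [0..<k] @ [[\<sigma> ! (2*k), x, y]]"
  define Xs where "Xs = map (\<lambda>c. T ?B (lcomm c)) ?FL"
  have d: "distinct \<sigma>" and l: "length \<sigma> = 2*k+3" using \<sigma> ml_len[OF \<sigma>] by (auto simp: mlwords_def)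
  have bp: "?B (\<sigma> ! (2*i)) = i" "?B (\<sigma> ! (2*i+1)) = i" if "i < k" for i
    using blk_nth[OF d, of "2*i" k] blk_nth[OF d, of "2*i+1" k] that l by auto
  have bt: "?B (\<sigma> ! (2*k)) = k" "?B x = k" "?B y = k"
    using blk_nth[OF d, of "2*k" k] blk_nth[OF d, of "2*k+1" k] blk_nth[OF d, of "2*k+2" k] l xy by auto
  have lx: "length Xs = k + 1" by (simp add: Xs_def)
  have xi: "Xs ! i = T ?B (lcomm [\<sigma> ! (2*i), \<sigma> ! (2*i+1)])" if "i < k" for i
    using that by (simp add: Xs_def nth_append)
  have xk: "Xs ! k = T ?B (lcomm [\<sigma> ! (2*k), x, y])"
    by (simp add: Xs_def nth_append)
  have sub: "\<forall>i<length Xs. Xs ! i \<in> Sub (0 + i)"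
  proof (intro allI impI)
    fix i assume "i < length Xs"
    then consider "i < k" | "i = k" using lx by linarith
    then show "Xs ! i \<in> Sub (0 + i)"
    proof cases
      case 1 then show ?thesis using T_lcomm_in[of "[\<sigma> ! (2*i+1)]" ?B "\<sigma> ! (2*i)"] xi bp by simp
    next
      case 2 then show ?thesis using T_lcomm_in[of "[x, y]" ?B "\<sigma> ! (2*k)"] xk bt by simp
    qed
  qed
  have kz: "\<forall>t. (t < 0 \<or> t \<ge> 0 + length Xs) \<longrightarrow> kap k \<sigma> t = []" using lx by (simp add: kap_def)
  have "Poly_Mapping.lookup (prod_list Xs) (kap k \<sigma>) = (\<Prod>i<length Xs. Poly_Mapping.lookup (Xs ! i) (dl (0+i) (kap k \<sigma> (0+i))))"
    using conjunct2[OF prod_slots[OF sub]] kz by simp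
  also have "\<dots> = (\<Prod>i<k. Poly_Mapping.lookup (Xs ! i) (dl i (kap k \<sigma> i))) * Poly_Mapping.lookup (Xs ! k) (dl k (kap k \<sigma> k))"
    using lx by simp
  also have "(\<Prod>i<k. Poly_Mapping.lookup (Xs ! i) (dl i (kap k \<sigma> i))) = 1"
  proof (rule prod.neutral, intro ballI)
    fix i assume "i \<in> {..<k}"
    then have i: "i < k" by simp
    have ne: "\<sigma> ! (2*i) \<noteq> \<sigma> ! (2*i+1)" using d l i by (simp add: nth_eq_iff_index_eq)
    have "Xs ! i = frag_extend (\<lambda>u. frag_of (dl i u)) (lcomm [\<sigma> ! (2*i), \<sigma> ! (2*i+1)])"
      using xi[OF i] T_lcomm_emb[of "[\<sigma> ! (2*i), \<sigma> ! (2*i+1)]" ?B i] bp[OF i] by simp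
    then show "Poly_Mapping.lookup (Xs ! i) (dl i (kap k \<sigma> i)) = 1"
      using i lookup_emb coef2[OF ne] by (simp add: kap_def)
  qed
  also have "Poly_Mapping.lookup (Xs ! k) (dl k (kap k \<sigma> k)) = Poly_Mapping.lookup (lcomm [\<sigma> ! (2*k), x, y]) [\<sigma> ! (2*k), \<sigma> ! (2*k+1), \<sigma> ! (2*k+2)]"
  proof -
    have "Xs ! k = frag_extend (\<lambda>u. frag_of (dl k u)) (lcomm [\<sigma> ! (2*k), x, y])"
      using xk T_lcomm_emb[of "[\<sigma> ! (2*k), x, y]" ?B k] bt by simp
    then show ?thesis using lookup_emb by (simp add: kap_def)
  qed
  finally show ?thesis by (simp add: Xs_def T_prod T_mult o_def)
qed

definition swp :: "nat \<Rightarrow> nat list \<Rightarrow> nat list" where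
  "swp k \<sigma> = \<sigma>[2*k+1 := \<sigma> ! (2*k+2), 2*k+2 := \<sigma> ! (2*k+1)]"

lemma Fn_self: assumes \<sigma>: "\<sigma> \<in> mlwords (2*k+3)" shows "Fn k \<sigma> (hb \<sigma>) = 1"
proof -
  have d: "distinct \<sigma>" and l: "length \<sigma> = 2*k+3" using \<sigma> ml_len[OF \<sigma>] by (auto simp: mlwords_def)
  have "psi_gen k \<sigma> = prod_list (map lcomm (map (\<lambda>j. [\<sigma> ! (2*j), \<sigma> ! (2*j+1)]) [0..<k] @ [[\<sigma> ! (2*k), \<sigma> ! (2*k+1), \<sigma> ! (2*k+2)]]))"
    using psi_gen_G[OF l] IL_idx[of k \<sigma>] l by (simp add: G_def)
  then show ?thesis unfolding Fn_hb using val[OF \<sigma>, of "\<sigma> ! (2*k+1)" "\<sigma> ! (2*k+2)"] coef3 d l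
    by (simp add: nth_eq_iff_index_eq)
qed

lemma Fn_swp: assumes \<sigma>: "\<sigma> \<in> mlwords (2*k+3)" shows "Fn k \<sigma> (hb (swp k \<sigma>)) = 0"
proof -
  have d: "distinct \<sigma>" and l: "length \<sigma> = 2*k+3" using \<sigma> ml_len[OF \<sigma>] by (auto simp: mlwords_def)
  let ?s = "swp k \<sigma>"
  have ls: "length ?s = 2*k+3" using l by (simp add: swp_def)
  have sn: "?s ! i = \<sigma> ! i" if "i < 2*k+1" for i using that by (simp add: swp_def)
  have "psi_gen k ?s = prod_list (map lcomm (map (\<lambda>j. [?s ! (2*j), ?s ! (2*j+1)]) [0..<k] @ [[?s ! (2*k), ?s ! (2*k+1), ?s ! (2*k+2)]]))"
    using psi_gen_G[OF ls] IL_idx[of k ?s] ls by (simp add: G_def)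
  also have "\<dots> = prod_list (map lcomm (map (\<lambda>j. [\<sigma> ! (2*j), \<sigma> ! (2*j+1)]) [0..<k] @ [[\<sigma> ! (2*k), \<sigma> ! (2*k+2), \<sigma> ! (2*k+1)]]))"
  proof -
    have m: "map (\<lambda>j. [?s ! (2*j), ?s ! (2*j+1)]) [0..<k] = map (\<lambda>j. [\<sigma> ! (2*j), \<sigma> ! (2*j+1)]) [0..<k]"
      by (rule map_cong) (auto simp: sn)
    have t: "?s ! (2*k) = \<sigma> ! (2*k)" "?s ! (2*k+1) = \<sigma> ! (2*k+2)" "?s ! (2*k+2) = \<sigma> ! (2*k+1)"
      using l by (auto simp: swp_def nth_list_update)
    show ?thesis unfolding m t ..
  qed
  finally show ?thesis unfolding Fn_hb using val[OF \<sigma>, of "\<sigma> ! (2*k+2)" "\<sigma> ! (2*k+1)"] coef3' d l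
    by (simp add: nth_eq_iff_index_eq)
qed


definition canon :: "nat \<Rightarrow> nat list \<Rightarrow> bool" where
  "canon k w \<longleftrightarrow> w \<in> mlwords (2*k+3) \<and> (\<forall>l\<le>k. w ! (2*l) < w ! (2*l+1))
     \<and> (\<forall>l. 1 \<le> l \<and> l < k \<longrightarrow> w ! (2*l-2) < w ! (2*l)) \<and> w ! (2*k) < w ! (2*k+2)"

lemma canon_chain: assumes "canon k w" "i < j" "j < k" shows "w ! (2*i) < w ! (2*j)"
  using assms(2,3)
proof (induct j)
  case 0 then show ?case by simp
next
  case (Suc j)
  have "1 \<le> Suc j \<and> Suc j < k" using Suc.prems by simp
  then have "w ! (2*Suc j - 2) < w ! (2*Suc j)" using assms(1) unfolding canon_def by blast
  moreover have "2*Suc j - 2 = 2*j" by simp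
  ultimately have step: "w ! (2*j) < w ! (2*Suc j)" by simp
  show ?case
  proof (cases "i = j")
    case True then show ?thesis using step by simp
  next
    case False then show ?thesis using Suc step by simp
  qed
qed

lemma block_img:
  assumes \<sigma>: "\<sigma> \<in> mlwords (2*k+3)"
  shows "{x \<in> set \<sigma>. blk k \<sigma> x = s} = (!) \<sigma> ` {p. p < 2*k+3 \<and> min (p div 2) k = s}"
proof -
  have d: "distinct \<sigma>" and l: "length \<sigma> = 2*k+3" using \<sigma> ml_len[OF \<sigma>] by (auto simp: mlwords_def)
  show ?thesis using d l by (auto simp: in_set_conv_nth blk_nth)
qed

lemma block_k: assumes \<sigma>: "\<sigma> \<in> mlwords (2*k+3)"
  shows "{x \<in> set \<sigma>. blk k \<sigma> x = k} = {\<sigma> ! (2*k), \<sigma> ! (2*k+1), \<sigma> ! (2*k+2)}"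
proof -
  have "{p. p < 2*k+3 \<and> min (p div 2) k = k} = {2*k, 2*k+1, 2*k+2}" by auto
  then show ?thesis using block_img[OF \<sigma>, of k] by simp
qed

lemma block_s: assumes \<sigma>: "\<sigma> \<in> mlwords (2*k+3)" and s: "s < k"
  shows "{x \<in> set \<sigma>. blk k \<sigma> x = s} = {\<sigma> ! (2*s), \<sigma> ! (2*s+1)}"
proof -
  have "{p. p < 2*k+3 \<and> min (p div 2) k = s} = {2*s, 2*s+1}" using s by auto
  then show ?thesis using block_img[OF \<sigma>, of s] by simp
qed

lemma matching:
  assumes c\<sigma>: "canon k \<sigma>" and c\<tau>: "canon k \<tau>"
    and pr: "\<forall>j<k. blk k \<sigma> (\<tau> ! (2*j+1)) = blk k \<sigma> (\<tau> ! (2*j))"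
    and tr: "blk k \<sigma> (\<tau> ! (2*k+1)) = blk k \<sigma> (\<tau> ! (2*k))" "blk k \<sigma> (\<tau> ! (2*k+2)) = blk k \<sigma> (\<tau> ! (2*k))"
  shows "\<tau> = \<sigma> \<or> \<tau> = swp k \<sigma>"
proof -
  let ?B = "blk k \<sigma>"
  have \<sigma>: "\<sigma> \<in> mlwords (2*k+3)" and \<tau>: "\<tau> \<in> mlwords (2*k+3)" using c\<sigma> c\<tau> by (auto simp: canon_def)
  have d\<sigma>: "distinct \<sigma>" and l\<sigma>: "length \<sigma> = 2*k+3" using \<sigma> ml_len[OF \<sigma>] by (auto simp: mlwords_def)
  have d\<tau>: "distinct \<tau>" and l\<tau>: "length \<tau> = 2*k+3" using \<tau> ml_len[OF \<tau>] by (auto simp: mlwords_def)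
  have st: "set \<tau> = set \<sigma>" using \<sigma> \<tau> by (simp add: mlwords_def)
  have tin: "\<tau> ! i \<in> set \<sigma>" if "i < 2*k+3" for i using that l\<tau> st nth_mem by fastforce
  have Ble: "?B x \<le> k" for x by (simp add: blk_def)
  define T3 where "T3 = {\<tau> ! (2*k), \<tau> ! (2*k+1), \<tau> ! (2*k+2)}"
  define S3 where "S3 = {\<sigma> ! (2*k), \<sigma> ! (2*k+1), \<sigma> ! (2*k+2)}"
  have cT3: "card T3 = 3" using d\<tau> l\<tau> by (simp add: T3_def nth_eq_iff_index_eq)
  have T3S3: "T3 = S3"
  proof -
    let ?s = "?B (\<tau> ! (2*k))"
    have sub: "T3 \<subseteq> {x \<in> set \<sigma>. ?B x = ?s}" using tr tin by (auto simp: T3_def)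
    then have "card T3 \<le> card {x \<in> set \<sigma>. ?B x = ?s}" by (intro card_mono) auto
    then have sk: "?s = k" using block_card[OF \<sigma>, of ?s] cT3 by (auto split: if_splits)
    have "card {x \<in> set \<sigma>. ?B x = ?s} \<le> 3" using block_card[OF \<sigma>, of ?s] sk by simp
    moreover have "card T3 \<le> card {x \<in> set \<sigma>. ?B x = ?s}" using sub by (intro card_mono) auto
    ultimately have "T3 = {x \<in> set \<sigma>. ?B x = ?s}" using sub cT3
      by (intro card_subset_eq) auto
    then show ?thesis using block_k[OF \<sigma>] sk by (simp add: S3_def)
  qed
  have pairs: "\<exists>s<k. \<tau> ! (2*j) = \<sigma> ! (2*s) \<and> \<tau> ! (2*j+1) = \<sigma> ! (2*s+1)" if j: "j < k" for j
  proof -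
    let ?s = "?B (\<tau> ! (2*j))"
    have m1: "\<tau> ! (2*j) \<in> {x \<in> set \<sigma>. ?B x = ?s}" using tin j by auto
    have m2: "\<tau> ! (2*j+1) \<in> {x \<in> set \<sigma>. ?B x = ?s}" using tin j pr by auto
    have nT: "\<tau> ! (2*j) \<notin> T3" using d\<tau> l\<tau> j by (auto simp: T3_def nth_eq_iff_index_eq)
    have "?s \<noteq> k"
    proof
      assume "?s = k"
      then have "\<tau> ! (2*j) \<in> S3" using m1 block_k[OF \<sigma>] by (simp add: S3_def)
      then show False using nT T3S3 by simp
    qed
    then have sk: "?s < k" using Ble[of "\<tau> ! (2*j)"] by simp
    have ne: "\<tau> ! (2*j) \<noteq> \<tau> ! (2*j+1)" using d\<tau> l\<tau> j by (simp add: nth_eq_iff_index_eq)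
    have o\<tau>: "\<tau> ! (2*j) < \<tau> ! (2*j+1)" using c\<tau> j by (simp add: canon_def)
    have o\<sigma>: "\<sigma> ! (2*?s) < \<sigma> ! (2*?s+1)" using c\<sigma> sk by (simp add: canon_def)
    have "\<tau> ! (2*j) \<in> {\<sigma> ! (2*?s), \<sigma> ! (2*?s+1)}" "\<tau> ! (2*j+1) \<in> {\<sigma> ! (2*?s), \<sigma> ! (2*?s+1)}"
      using m1 m2 block_s[OF \<sigma> sk] by auto
    then have "\<tau> ! (2*j) = \<sigma> ! (2*?s) \<and> \<tau> ! (2*j+1) = \<sigma> ! (2*?s+1)" using ne o\<tau> o\<sigma> by auto
    then show ?thesis using sk by blast
  qed
  define L\<tau> where "L\<tau> = map (\<lambda>j. \<tau> ! (2*j)) [0..<k]"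
  define L\<sigma> where "L\<sigma> = map (\<lambda>j. \<sigma> ! (2*j)) [0..<k]"
  have sw\<tau>: "sorted_wrt (<) L\<tau>" unfolding sorted_wrt_iff_nth_less L\<tau>_def
    using canon_chain[OF c\<tau>] by simp
  have sw\<sigma>: "sorted_wrt (<) L\<sigma>" unfolding sorted_wrt_iff_nth_less L\<sigma>_def
    using canon_chain[OF c\<sigma>] by simp
  have ssub: "set L\<tau> \<subseteq> set L\<sigma>" using pairs by (force simp: L\<tau>_def L\<sigma>_def)
  have "card (set L\<tau>) = length L\<tau>" "card (set L\<sigma>) = length L\<sigma>"
    using distinct_card sw\<tau> sw\<sigma> by (auto simp: strict_sorted_iff simp del: set_map)
  then have "card (set L\<tau>) = k" "card (set L\<sigma>) = k" by (simp_all add: L\<tau>_def L\<sigma>_def del: set_map)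
  then have "set L\<tau> = set L\<sigma>" using ssub by (intro card_subset_eq) auto
  then have "L\<tau> = L\<sigma>" using sw\<tau> sw\<sigma> by (intro sorted_distinct_set_unique) (auto simp: strict_sorted_iff)
  then have ev: "\<tau> ! (2*j) = \<sigma> ! (2*j)" if "j < k" for j
    using that arg_cong[OF \<open>L\<tau> = L\<sigma>\<close>, of "\<lambda>L. L ! j"] by (simp add: L\<tau>_def L\<sigma>_def)
  have od: "\<tau> ! (2*j+1) = \<sigma> ! (2*j+1)" if j: "j < k" for j
  proof -
    obtain s where s: "s < k" "\<tau> ! (2*j) = \<sigma> ! (2*s)" "\<tau> ! (2*j+1) = \<sigma> ! (2*s+1)" using pairs[OF j] by blast
    then have "\<sigma> ! (2*s) = \<sigma> ! (2*j)" using ev[OF j] by simp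
    then have "s = j" using d\<sigma> l\<sigma> s(1) j by (simp add: nth_eq_iff_index_eq)
    then show ?thesis using s by simp
  qed
  have t0: "\<tau> ! (2*k) = \<sigma> ! (2*k)"
  proof (rule ccontr)
    assume ne: "\<tau> ! (2*k) \<noteq> \<sigma> ! (2*k)"
    have o\<sigma>: "\<sigma> ! (2*k) < \<sigma> ! (2*k+1)" "\<sigma> ! (2*k) < \<sigma> ! (2*k+2)" using c\<sigma> by (auto simp: canon_def)
    have o\<tau>: "\<tau> ! (2*k) < \<tau> ! (2*k+1)" "\<tau> ! (2*k) < \<tau> ! (2*k+2)" using c\<tau> by (auto simp: canon_def)
    have "\<tau> ! (2*k) \<in> S3" using T3S3 by (auto simp: T3_def)
    then have a: "\<sigma> ! (2*k) < \<tau> ! (2*k)" using ne o\<sigma> by (auto simp: S3_def)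
    have "\<sigma> ! (2*k) \<in> T3" using T3S3 by (auto simp: S3_def)
    then have "\<tau> ! (2*k) \<le> \<sigma> ! (2*k)" using o\<tau> by (auto simp: T3_def)
    then show False using a by simp
  qed
  have t12: "(\<tau> ! (2*k+1) = \<sigma> ! (2*k+1) \<and> \<tau> ! (2*k+2) = \<sigma> ! (2*k+2)) \<or>
             (\<tau> ! (2*k+1) = \<sigma> ! (2*k+2) \<and> \<tau> ! (2*k+2) = \<sigma> ! (2*k+1))"
  proof -
    have n1: "\<tau> ! (2*k+1) \<noteq> \<sigma> ! (2*k)" "\<tau> ! (2*k+2) \<noteq> \<sigma> ! (2*k)" "\<tau> ! (2*k+1) \<noteq> \<tau> ! (2*k+2)"
    proof -
      have a: "\<tau> ! (2*k+1) \<noteq> \<tau> ! (2*k)" "\<tau> ! (2*k+2) \<noteq> \<tau> ! (2*k)" "\<tau> ! (2*k+1) \<noteq> \<tau> ! (2*k+2)"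
        using d\<tau> l\<tau> by (simp_all add: nth_eq_iff_index_eq)
      then show "\<tau> ! (2*k+1) \<noteq> \<sigma> ! (2*k)" "\<tau> ! (2*k+2) \<noteq> \<sigma> ! (2*k)" "\<tau> ! (2*k+1) \<noteq> \<tau> ! (2*k+2)"
        using t0 by auto
    qed
    have "\<tau> ! (2*k+1) \<in> S3" "\<tau> ! (2*k+2) \<in> S3" using T3S3 by (auto simp: T3_def)
    then show ?thesis using n1 by (auto simp: S3_def)
  qed
  have lo: "\<tau> ! i = \<sigma> ! i" if "i < 2*k" for i
  proof -
    have "i = 2*(i div 2) \<or> i = 2*(i div 2)+1" by auto
    moreover have "i div 2 < k" using that by auto
    ultimately show ?thesis using ev od by metis
  qed
  from t12 show ?thesis
  proof
    assume h: "\<tau> ! (2*k+1) = \<sigma> ! (2*k+1) \<and> \<tau> ! (2*k+2) = \<sigma> ! (2*k+2)"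
    have "\<tau> = \<sigma>"
    proof (rule nth_equalityI)
      show "length \<tau> = length \<sigma>" using l\<tau> l\<sigma> by simp
      fix i assume "i < length \<tau>"
      then have "i < 2*k \<or> i = 2*k \<or> i = 2*k+1 \<or> i = 2*k+2" using l\<tau> by auto
      then show "\<tau> ! i = \<sigma> ! i" using lo t0 h by auto
    qed
    then show ?thesis ..
  next
    assume h: "\<tau> ! (2*k+1) = \<sigma> ! (2*k+2) \<and> \<tau> ! (2*k+2) = \<sigma> ! (2*k+1)"
    have "\<tau> = swp k \<sigma>"
    proof (rule nth_equalityI)
      show "length \<tau> = length (swp k \<sigma>)" using l\<tau> l\<sigma> by (simp add: swp_def)
      fix i assume "i < length \<tau>"
      then have "i < 2*k \<or> i = 2*k \<or> i = 2*k+1 \<or> i = 2*k+2" using l\<tau> by auto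
      then show "\<tau> ! i = swp k \<sigma> ! i" using lo t0 h l\<sigma> by (auto simp: swp_def nth_list_update)
    qed
    then show ?thesis ..
  qed
qed



lemma Fn_add: "Fn k \<sigma> (a + b) = Fn k \<sigma> a + Fn k \<sigma> b"
  by (simp add: Fn_def psi_lift_eq frag_extend_add T_add lookup_add)

lemma Fn_canon:
  assumes c\<sigma>: "canon k \<sigma>" and c\<tau>: "canon k \<tau>"
  shows "Fn k \<sigma> (hb \<tau>) = (if \<tau> = \<sigma> then 1 else 0)"
proof (cases "\<tau> = \<sigma>")
  case True then show ?thesis using Fn_self c\<sigma> by (simp add: canon_def)
next
  case False
  let ?B = "blk k \<sigma>"
  have \<sigma>: "\<sigma> \<in> mlwords (2*k+3)" and \<tau>: "\<tau> \<in> mlwords (2*k+3)" using c\<sigma> c\<tau> by (auto simp: canon_def)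
  have l\<tau>: "length \<tau> = 2*k+3" using ml_len[OF \<tau>] .
  have IL: "IL k \<tau> = map (\<lambda>j. [\<tau> ! (2*j), \<tau> ! (2*j+1)]) [0..<k] @ [[\<tau> ! (2*k), \<tau> ! (2*k+1), \<tau> ! (2*k+2)]]"
    using IL_idx[of k \<tau>] l\<tau> by simp
  show ?thesis
  proof (cases "\<forall>c\<in>set (IL k \<tau>). \<forall>y\<in>set c. ?B y = ?B (hd c)")
    case True
    have pr: "\<forall>j<k. ?B (\<tau> ! (2*j+1)) = ?B (\<tau> ! (2*j))"
    proof (intro allI impI)
      fix j assume "j < k"
      then have "[\<tau> ! (2*j), \<tau> ! (2*j+1)] \<in> set (IL k \<tau>)" unfolding IL by auto
      then show "?B (\<tau> ! (2*j+1)) = ?B (\<tau> ! (2*j))" using True by fastforce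
    qed
    have "[\<tau> ! (2*k), \<tau> ! (2*k+1), \<tau> ! (2*k+2)] \<in> set (IL k \<tau>)" unfolding IL by auto
    then have tr: "?B (\<tau> ! (2*k+1)) = ?B (\<tau> ! (2*k))" "?B (\<tau> ! (2*k+2)) = ?B (\<tau> ! (2*k))"
      using True by fastforce+
    have "\<tau> = swp k \<sigma>" using matching[OF c\<sigma> c\<tau> pr tr] False by simp
    then show ?thesis using Fn_swp[OF \<sigma>] False by simp
  next
    case nsb: False
    then obtain c where c: "c \<in> set (IL k \<tau>)" "\<not> (\<forall>y\<in>set c. ?B y = ?B (hd c))" by blast
    obtain i js where cij: "c = i # js" using c(2) by (cases c) auto
    then have "\<not> (\<forall>j\<in>set js. ?B j = ?B i)" using c by auto
    then have z: "T ?B (lcomm c) = 0" using T_lcomm_zero cij by simp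
    have "T ?B (psi_gen k \<tau>) = prod_list (map (\<lambda>c. T ?B (lcomm c)) (IL k \<tau>))"
      using psi_gen_G[OF l\<tau>] by (simp add: G_def T_prod o_def)
    also have "\<dots> = 0" using c z by (intro prod_list_zero) force
    finally show ?thesis unfolding Fn_hb using False by simp
  qed
qed

definition Qg :: "nat \<Rightarrow> (nat list \<Rightarrow>\<^sub>0 int) set" where
  "Qg k = {hb (a @ [p, q] @ b) + hb (a @ [q, p] @ b) | a p q b l.
        a @ [p, q] @ b \<in> mlwords (2*k+3) \<and> 1 \<le> l \<and> l \<le> k+1 \<and> length a = 2*l-2}
   \<union> {hb (a @ [p, q, r, s] @ b) - hb (a @ [r, s, p, q] @ b) | a p q r s b l.
        a @ [p, q, r, s] @ b \<in> mlwords (2*k+3) \<and> 2 \<le> l \<and> l \<le> k \<and> length a = 2*l-4}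
   \<union> {hb (a @ [p, q, r]) + hb (a @ [q, r, p]) + hb (a @ [r, p, q]) | a p q r.
        a @ [p, q, r] \<in> mlwords (2*k+3) \<and> length a = 2*k}"

lemma Q_eq: "Q k = addgen (Qg k)" by (simp add: Q_def Qg_def)

definition R :: "nat \<Rightarrow> (nat list \<Rightarrow>\<^sub>0 int) set" where
  "R k = addgen (Qg k \<union> {hb \<tau> | \<tau>. canon k \<tau>})"

lemma R_diff: "a \<in> R k \<Longrightarrow> b \<in> R k \<Longrightarrow> a - b \<in> R k" by (simp add: R_def addgen.diff)
lemma R_zero: "0 \<in> R k" by (simp add: R_def addgen.zero)
lemma R_add: "a \<in> R k \<Longrightarrow> b \<in> R k \<Longrightarrow> a + b \<in> R k"
  using R_diff[of a k "0 - b"] R_diff[OF R_zero, of b k] by simp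
lemma R_Qg: "g \<in> Qg k \<Longrightarrow> g \<in> R k" by (simp add: R_def addgen.gen)
lemma R_can: "canon k \<tau> \<Longrightarrow> hb \<tau> \<in> R k" by (auto simp: R_def intro: addgen.gen)

lemma Qg1: "a @ [p,q] @ b \<in> mlwords (2*k+3) \<Longrightarrow> 1 \<le> l \<Longrightarrow> l \<le> k+1 \<Longrightarrow> length a = 2*l-2
   \<Longrightarrow> hb (a @ [p, q] @ b) + hb (a @ [q, p] @ b) \<in> Qg k"
  unfolding Qg_def by blast
lemma Qg2: "a @ [p,q,r,s] @ b \<in> mlwords (2*k+3) \<Longrightarrow> 2 \<le> l \<Longrightarrow> l \<le> k \<Longrightarrow> length a = 2*l-4
   \<Longrightarrow> hb (a @ [p, q, r, s] @ b) - hb (a @ [r, s, p, q] @ b) \<in> Qg k"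
  unfolding Qg_def by blast
lemma Qg3: "a @ [p,q,r] \<in> mlwords (2*k+3) \<Longrightarrow> length a = 2*k
   \<Longrightarrow> hb (a @ [p, q, r]) + hb (a @ [q, r, p]) + hb (a @ [r, p, q]) \<in> Qg k"
  unfolding Qg_def by blast

lemma split2: "n + 2 \<le> length w \<Longrightarrow> w = take n w @ [w ! n, w ! (n+1)] @ drop (n+2) w"
proof -
  assume h: "n + 2 \<le> length w"
  have "take (n+2) w = take n w @ [w ! n, w ! (n+1)]"
    using h by (simp add: take_Suc_conv_app_nth numeral_2_eq_2)
  then show ?thesis by (metis append.assoc append_take_drop_id)
qed

lemma split4: "n + 4 \<le> length w \<Longrightarrow> w = take n w @ [w ! n, w ! (n+1), w ! (n+2), w ! (n+3)] @ drop (n+4) w"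
proof -
  assume h: "n + 4 \<le> length w"
  have "take (n+4) w = take n w @ [w ! n, w ! (n+1), w ! (n+2), w ! (n+3)]"
    using h by (simp add: take_Suc_conv_app_nth numeral_eq_Suc)
  then show ?thesis by (metis append.assoc append_take_drop_id)
qed

lemma lex_step: "length u = length v \<Longrightarrow> x < y \<Longrightarrow> (a @ x # u, a @ y # v) \<in> lex less_than"
  by (auto simp: lex_conv)

lemma reduce: "w \<in> mlwords (2*k+3) \<Longrightarrow> hb w \<in> R k"
proof (induct w rule: wf_induct[OF wf_lex[OF wf_less_than]])
  case (1 w)
  note IH = 1(1)
  have w: "w \<in> mlwords (2*k+3)" using 1(2) .
  have d: "distinct w" and l: "length w = 2*k+3" using w ml_len[OF w] by (auto simp: mlwords_def)
  have ne: "w ! i \<noteq> w ! j" if "i < 2*k+3" "j < 2*k+3" "i \<noteq> j" for i j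
    using d l that by (simp add: nth_eq_iff_index_eq)
  show ?case
  proof (cases "canon k w")
    case True then show ?thesis by (rule R_can)
  next
    case nc: False
    show ?thesis
    proof (cases "\<forall>l\<le>k. w ! (2*l) < w ! (2*l+1)")
      case False
      then obtain l where lk: "l \<le> k" and ng: "\<not> w ! (2*l) < w ! (2*l+1)" by blast
      have gt: "w ! (2*l+1) < w ! (2*l)" using ng ne[of "2*l" "2*l+1"] lk by linarith
      define a where "a = take (2*l) w"
      define b where "b = drop (2*l+2) w"
      let ?p = "w ! (2*l)" and ?q = "w ! (2*l+1)"
      have ws: "w = a @ [?p, ?q] @ b" unfolding a_def b_def using split2[of "2*l" w] l lk by simp
      have la: "length a = 2*(l+1) - 2" using l lk by (simp add: a_def)
      define w' where "w' = a @ [?q, ?p] @ b"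
      have w'm: "w' \<in> mlwords (2*k+3)" using ml_swap2[of a ?p ?q b] w ws by (simp add: w'_def)
      have lt0: "(a @ ?q # (?p # b), a @ ?p # (?q # b)) \<in> lex less_than"
        by (rule lex_step) (use gt in simp_all)
      have e1: "a @ ?p # ?q # b = w" using ws by simp
      have e2: "w' = a @ ?q # ?p # b" by (simp add: w'_def)
      have lt: "(w', w) \<in> lex less_than" using lt0 unfolding e1 e2[symmetric] .
      have g: "hb w + hb w' \<in> Qg k"
        using Qg1[of a ?p ?q b k "l+1"] w ws la lk by (simp add: w'_def)
      have "hb w = (hb w + hb w') - hb w'" by simp
      then show ?thesis using R_diff[OF R_Qg[OF g] IH[rule_format, OF lt w'm]] by simp
    next
      case ori: True
      show ?thesis
      proof (cases "\<forall>l. 1 \<le> l \<and> l < k \<longrightarrow> w ! (2*l-2) < w ! (2*l)")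
        case False
        then obtain l where l1: "1 \<le> l" "l < k" and ge: "\<not> w ! (2*l-2) < w ! (2*l)" by blast
        have gt: "w ! (2*l) < w ! (2*l-2)" using ge ne[of "2*l" "2*l-2"] l1 by linarith
        define n where "n = 2*l-2"
        have n2: "n + 2 = 2*l" "n + 3 = 2*l+1" using l1 by (auto simp: n_def)
        define a where "a = take n w"
        define b where "b = drop (n+4) w"
        let ?p = "w ! n" and ?q = "w ! (n+1)" and ?r = "w ! (n+2)" and ?s = "w ! (n+3)"
        have ws: "w = a @ [?p, ?q, ?r, ?s] @ b"
          unfolding a_def b_def using split4[of n w] l l1 by (simp add: n_def)
        have la: "length a = 2*(l+1) - 4" using l l1 by (simp add: a_def n_def)
        define w' where "w' = a @ [?r, ?s, ?p, ?q] @ b"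
        have w'm: "w' \<in> mlwords (2*k+3)" using ml_swap4[of a ?p ?q ?r ?s b] w ws by (simp add: w'_def)
        have lt: "(w', w) \<in> lex less_than"
          using lex_step[of "[?s, ?p, ?q] @ b" "[?q, ?r, ?s] @ b" ?r ?p a] gt ws n2 by (simp add: w'_def n_def)
        have g: "hb w - hb w' \<in> Qg k"
          using Qg2[of a ?p ?q ?r ?s b k "l+1"] w ws la l1 by (simp add: w'_def)
        have "hb w = (hb w - hb w') + hb w'" by simp
        then show ?thesis using R_add[OF R_Qg[OF g] IH[rule_format, OF lt w'm]] by simp
      next
        case srt: True
        have gt: "w ! (2*k+2) < w ! (2*k)" using nc ori srt w ne[of "2*k" "2*k+2"] by (auto simp: canon_def)
        define a where "a = take (2*k) w"
        let ?x = "w ! (2*k)" and ?y = "w ! (2*k+1)" and ?z = "w ! (2*k+2)"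
        have ws: "w = a @ [?x, ?y, ?z]"
        proof -
          have "w = a @ [?x, ?y] @ drop (2*k+2) w" unfolding a_def using split2[of "2*k" w] l by simp
          moreover have "drop (2*k+2) w = [?z]" using Cons_nth_drop_Suc[of "2*k+2" w] l by simp
          ultimately show ?thesis by simp
        qed
        have la: "length a = 2*k" using l by (simp add: a_def)
        have m1: "a @ [?y, ?z, ?x] \<in> mlwords (2*k+3)" using ml_rot3[of a ?x ?y ?z] w ws by simp
        have m2: "a @ [?z, ?x, ?y] \<in> mlwords (2*k+3)" using ml_rot3[OF m1] .
        have m3: "a @ [?z, ?y, ?x] \<in> mlwords (2*k+3)" using ml_swap2[of a ?y ?z "[?x]"] m1 by simp
        have g3: "hb w + hb (a @ [?y, ?z, ?x]) + hb (a @ [?z, ?x, ?y]) \<in> Qg k"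
          using Qg3[of a ?x ?y ?z k] w ws la by simp
        have g1: "hb (a @ [?y, ?z] @ [?x]) + hb (a @ [?z, ?y] @ [?x]) \<in> Qg k"
          using Qg1[of a ?y ?z "[?x]" k "k+1"] m1 la by simp
        have lt2: "(a @ [?z, ?x, ?y], w) \<in> lex less_than"
          using lex_step[of "[?x, ?y]" "[?y, ?z]" ?z ?x a] gt ws by simp
        have lt3: "(a @ [?z, ?y, ?x], w) \<in> lex less_than"
          using lex_step[of "[?y, ?x]" "[?y, ?z]" ?z ?x a] gt ws by simp
        have "hb w = (hb w + hb (a @ [?y, ?z, ?x]) + hb (a @ [?z, ?x, ?y]))
            - (hb (a @ [?y, ?z] @ [?x]) + hb (a @ [?z, ?y] @ [?x])) + hb (a @ [?z, ?y, ?x]) - hb (a @ [?z, ?x, ?y])"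
          by simp
        then show ?thesis
          using R_diff[OF R_add[OF R_diff[OF R_Qg[OF g3] R_Qg[OF g1]] IH[rule_format, OF lt3 m3]] IH[rule_format, OF lt2 m2]]
          by simp
      qed
    qed
  qed
qed



lemma R_decomp: "r \<in> R k \<Longrightarrow> \<exists>q c. q \<in> Q k \<and> Poly_Mapping.keys c \<subseteq> {\<tau>. canon k \<tau>} \<and> r = q + c"
  unfolding R_def
proof (induct rule: addgen.induct)
  case zero
  have "(0::nat list \<Rightarrow>\<^sub>0 int) \<in> Q k" by (simp add: Q_eq addgen.zero)
  then show ?case by (intro exI[of _ 0]) simp
next
  case (gen x)
  then show ?case
  proof
    assume "x \<in> Qg k"
    then have "x \<in> Q k" by (simp add: Q_eq addgen.gen)
    then show ?thesis by (intro exI[of _ x] exI[of _ 0]) simp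
  next
    assume "x \<in> {hb \<tau> | \<tau>. canon k \<tau>}"
    then obtain \<tau> where "x = hb \<tau>" "canon k \<tau>" by blast
    moreover have "(0::nat list \<Rightarrow>\<^sub>0 int) \<in> Q k" by (simp add: Q_eq addgen.zero)
    ultimately show ?thesis by (intro exI[of _ 0] exI[of _ x]) (simp add: hb_keys)
  qed
next
  case (diff a b)
  then obtain q1 c1 q2 c2 where h: "q1 \<in> Q k" "Poly_Mapping.keys c1 \<subseteq> {\<tau>. canon k \<tau>}" "a = q1 + c1"
    "q2 \<in> Q k" "Poly_Mapping.keys c2 \<subseteq> {\<tau>. canon k \<tau>}" "b = q2 + c2" by blast
  have "q1 - q2 \<in> Q k" using h by (simp add: Q_eq addgen.diff)
  moreover have "Poly_Mapping.keys (c1 - c2) \<subseteq> {\<tau>. canon k \<tau>}" using h keys_diff_sub[of c1 c2] by blast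
  moreover have "a - b = (q1 - q2) + (c1 - c2)" using h by simp
  ultimately show ?case by blast
qed

lemma Fn_c: assumes "canon k \<sigma>" "Poly_Mapping.keys c \<subseteq> {\<tau>. canon k \<tau>}"
  shows "Fn k \<sigma> c = Poly_Mapping.lookup c \<sigma>"
  using assms(2)
proof (induct c rule: frag_induction)
  case zero then show ?case by (simp add: Fn_zero)
next
  case (one \<tau>)
  then show ?case using Fn_canon[OF assms(1), of \<tau>] by (simp add: hb_def)
next
  case (diff a b) then show ?case by (simp add: Fn_diff lookup_minus)
qed

lemma H_R: "h \<in> H k \<Longrightarrow> h \<in> R k"
  unfolding H_def
proof -
  assume "h \<in> {h. Poly_Mapping.keys h \<subseteq> mlwords (2*k+3)}"
  then have "Poly_Mapping.keys h \<subseteq> mlwords (2*k+3)" by simp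
  then show "h \<in> R k"
  proof (induct h rule: frag_induction)
    case zero then show ?case by (rule R_zero)
  next
    case (one w) then show ?case using reduce[of w k] by (simp add: hb_def)
  next
    case (diff a b) then show ?case by (rule R_diff)
  qed
qed

lemma ker_sub_Q: "ker_psi k \<subseteq> Q k"
proof
  fix h assume hk: "h \<in> ker_psi k"
  then have "h \<in> H k" by (simp add: ker_psi_def)
  then obtain q c where qc: "q \<in> Q k" "Poly_Mapping.keys c \<subseteq> {\<tau>. canon k \<tau>}" "h = q + c"
    using R_decomp H_R by blast
  have c0: "c = 0"
  proof (rule poly_mapping_eqI)
    fix \<sigma>
    show "Poly_Mapping.lookup c \<sigma> = Poly_Mapping.lookup 0 \<sigma>"
    proof (cases "\<sigma> \<in> Poly_Mapping.keys c")
      case False then show ?thesis by (simp add: in_keys_iff)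
    next
      case True
      then have c\<sigma>: "canon k \<sigma>" using qc by blast
      then have \<sigma>: "\<sigma> \<in> mlwords (2*k+3)" by (simp add: canon_def)
      have "Fn k \<sigma> h = 0" using Fn_ker[OF \<sigma> hk] .
      moreover have "Fn k \<sigma> q = 0" using Fn_ker[OF \<sigma>] Q_sub_ker qc(1) by blast
      ultimately have "Fn k \<sigma> c = 0" using qc(3) Fn_add by simp
      then show ?thesis using Fn_c[OF c\<sigma> qc(2)] by simp
    qed
  qed
  show "h \<in> Q k" using qc c0 by simp
qed

theorem lemma3p7:
  fixes k :: nat
  assumes "k \<ge> 1"
  shows "ker_psi k = Q k"
  using ker_sub_Q Q_sub_ker by blast

end
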